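(* Let $S,T$ be valid configurations and $M:S\to T$ a bijection. Let $i,j\in\{1,2\}$ and let $A\neq B$ and $C\neq D$ be pairs of $M$ with $(i,A,B)\neq(j,C,D)$. If the boundaries $\partial\mathcal V^{(i)}_{AB}$ and $\partial\mathcal V^{(j)}_{CD}$ intersect in finitely many points (i.e., they do not partially overlap), then they intersect in at most four points.
   Context: For $p\in\mathbb R^2$, $D(p)$ is the open unit disc centered at $p$; a configuration is a finite set of points in $\mathbb R^2$, valid if any two distinct points of it are at distance at least $2$. A pair of $M$ is $A=(A^S,A^T)$ with $A^T=M(A^S)$. For $\vec v\in\mathbb R^2$, $H_{\vec v}(A)$ is the convex hull of $D(A^S)\cup D(A^T+\vec v)$. The vippodromes are $\mathcal V^{(1)}_{AB}=\{\vec v: D(A^S)\cap H_{\vec v}(B)\neq\emptyset\}$ and $\mathcal V^{(2)}_{AB}=\{\vec v: D(B^T+\vec v)\cap H_{\vec v}(A)\neq\emptyset\}$. (Each vippodrome boundary is a smooth concatenation of two rays and a circular arc of radius $2$.) *)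

theory Defs
  imports "HOL-Analysis.Analysis"
begin

type_synonym pt = "real^2"

definition disc :: "pt \<Rightarrow> pt set" where
  "disc p = ball p 1"

definition valid_config :: "pt set \<Rightarrow> bool" where
  "valid_config S \<longleftrightarrow> finite S \<and> (\<forall>x\<in>S. \<forall>y\<in>S. x \<noteq> y \<longrightarrow> dist x y \<ge> 2)"

text \<open>Pairs of M: A = (A^S, A^T) with A^S in S and A^T = M A^S.\<close>
definition pairs_of :: "(pt \<Rightarrow> pt) \<Rightarrow> pt set \<Rightarrow> (pt \<times> pt) set" where
  "pairs_of M S = {(s, M s) | s. s \<in> S}"

definition hull_pair :: "pt \<Rightarrow> pt \<times> pt \<Rightarrow> pt set" where
  "hull_pair v A = convex hull (disc (fst A) \<union> disc (snd A + v))"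

definition vipp1 :: "pt \<times> pt \<Rightarrow> pt \<times> pt \<Rightarrow> pt set" where
  "vipp1 A B = {v. disc (fst A) \<inter> hull_pair v B \<noteq> {}}"

definition vipp2 :: "pt \<times> pt \<Rightarrow> pt \<times> pt \<Rightarrow> pt set" where
  "vipp2 A B = {v. disc (snd B + v) \<inter> hull_pair v A \<noteq> {}}"

definition vippodrome :: "nat \<Rightarrow> pt \<times> pt \<Rightarrow> pt \<times> pt \<Rightarrow> pt set" where
  "vippodrome i A B = (if i = 1 then vipp1 A B else vipp2 A B)"

end

theory Submission
  imports Defs
begin


lemma inner2: "inner (x::real^2) y = x$1*y$1 + x$2*y$2"
  by (simp add: inner_vec_def sum_2)
lemma norm2sq: "(norm (x::real^2))^2 = x$1^2 + x$2^2"
  by (simp add: norm_vec_def L2_set_def sum_2)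
lemma vec2_eq: "(x::real^2) = y \<longleftrightarrow> x$1 = y$1 \<and> x$2 = y$2"
  by (metis (mono_tags) exhaust_2 vec_eq_iff)

definition rot :: "real^2 \<Rightarrow> real^2" where "rot x = vector [- x$2, x$1]"

lemma rot_1[simp]: "rot x $ 1 = - x$2" and rot_2[simp]: "rot x $ 2 = x$1"
  by (simp_all add: rot_def)

lemma inner_rot_rot[simp]: "inner (rot x) (rot y) = inner x y"
  by (simp add: inner2 algebra_simps)
lemma inner_rot_self[simp]: "inner x (rot x) = 0" "inner (rot x) x = 0"
  by (simp_all add: inner2 algebra_simps)
lemma norm_rot[simp]: "norm (rot x) = norm x"
  by (metis inner_rot_rot norm_eq_sqrt_inner)
lemma rot_add: "rot (x + y) = rot x + rot y" and rot_scale: "rot (a *\<^sub>R x) = a *\<^sub>R rot x"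
  and rot_minus: "rot (- x) = - rot x" and rot_diff: "rot (x - y) = rot x - rot y"
  by (simp_all add: vec2_eq)
lemma inner_rot_swap: "inner x (rot y) = - inner (rot x) y"
  by (simp add: inner2 algebra_simps)

lemma decomp2:
  assumes "norm m = 1"
  shows "x = inner x m *\<^sub>R m + inner x (rot m) *\<^sub>R rot m"
proof -
  have h: "m$1^2 + m$2^2 = 1" using assms norm2sq[of m] by simp
  have e1: "x$1 = (x$1*m$1 + x$2*m$2) * m$1 + (x$1*(-m$2) + x$2*m$1)*(-m$2)"
  proof -
    have "(x$1*m$1 + x$2*m$2) * m$1 + (x$1*(-m$2) + x$2*m$1)*(-m$2) = x$1*(m$1^2 + m$2^2)"
      by (simp add: power2_eq_square algebra_simps)
    then show ?thesis using h by simp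
  qed
  have e2: "x$2 = (x$1*m$1 + x$2*m$2) * m$2 + (x$1*(-m$2) + x$2*m$1)*(m$1)"
  proof -
    have "(x$1*m$1 + x$2*m$2) * m$2 + (x$1*(-m$2) + x$2*m$1)*(m$1) = x$2*(m$1^2 + m$2^2)"
      by (simp add: power2_eq_square algebra_simps)
    then show ?thesis using h by simp
  qed
  show ?thesis unfolding vec2_eq inner2 using e1 e2 by simp
qed

lemma norm_sq_decomp:
  assumes "norm m = 1"
  shows "(norm x)^2 = (inner x m)^2 + (inner x (rot m))^2"
proof -
  have h: "m$1^2 + m$2^2 = 1" using assms norm2sq[of m] by simp
  have "(inner x m)^2 + (inner x (rot m))^2 = (x$1^2 + x$2^2) * (m$1^2 + m$2^2)"
    by (simp add: inner2 power2_eq_square algebra_simps)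
  then show ?thesis using h norm2sq[of x] by simp
qed

lemma unit_perp:
  assumes "norm m = 1" "norm n = 1" "inner n (rot m) = 0"
  shows "n = m \<or> n = - m"
proof -
  have "n = inner n m *\<^sub>R m" using decomp2[OF assms(1), of n] assms(3) by simp
  moreover have "(inner n m)^2 = 1" using norm_sq_decomp[OF assms(1), of n] assms by simp
  then have "inner n m = 1 \<or> inner n m = -1"
    by (metis abs_power2 power2_eq_1_iff)
  ultimately show ?thesis by auto
qed


definition NN :: "real^2 \<Rightarrow> (real^2) set" where
  "NN q = {m. norm m = 1 \<and> inner q m \<ge> 2}"
definition LL :: "real^2 \<Rightarrow> real^2 \<Rightarrow> (real^2) set" where
  "LL q c = {w. \<forall>m\<in>NN q. inner (w - c) m \<le> 2}"
definition GG :: "real^2 \<Rightarrow> real^2 \<Rightarrow> (real^2) set" where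
  "GG q c = {w. w \<in> LL q c \<and> (\<exists>m\<in>NN q. inner (w - c) m = 2)}"

lemma convex_LL: "convex (LL q c)"
  unfolding convex_def LL_def
proof (clarify)
  fix x y u v m assume x: "\<forall>m\<in>NN q. inner (x - c) m \<le> 2" and y: "\<forall>m\<in>NN q. inner (y - c) m \<le> 2"
    and u: "0 \<le> (u::real)" and v: "0 \<le> v" and uv: "u + v = 1" and m: "m \<in> NN q"
  have "u *\<^sub>R x + v *\<^sub>R y - c = u *\<^sub>R (x - c) + v *\<^sub>R (y - c)" using uv
    by (simp add: algebra_simps) (metis scaleR_add_left scaleR_one)
  then have "inner (u *\<^sub>R x + v *\<^sub>R y - c) m = u * inner (x - c) m + v * inner (y - c) m"
    by (simp add: inner_add_left)
  also have "\<dots> \<le> u * 2 + v * 2"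
    using x y m u v by (intro add_mono mult_left_mono) auto
  finally show "inner (u *\<^sub>R x + v *\<^sub>R y - c) m \<le> 2" using uv by (simp add: algebra_simps)
qed

lemma inner_seg:
  assumes "w \<in> closed_segment a b"
  obtains u where "0 \<le> u" "u \<le> 1" "inner (w - c) m = (1 - u) * inner (a - c) m + u * inner (b - c) m"
proof -
  obtain u where u: "0 \<le> u" "u \<le> 1" "w = (1 - u) *\<^sub>R a + u *\<^sub>R b"
    using assms by (auto simp: closed_segment_def)
  have "w - c = (1 - u) *\<^sub>R (a - c) + u *\<^sub>R (b - c)" using u(3)
    by (simp add: algebra_simps)
  then have "inner (w - c) m = (1 - u) * inner (a - c) m + u * inner (b - c) m"
    by (simp add: inner_add_left)
  then show ?thesis using u that by blast
qed

lemma seg_in_GG: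
  assumes "a \<in> LL q c" "b \<in> LL q c" "m \<in> NN q" "inner (a - c) m = 2" "inner (b - c) m = 2"
  shows "closed_segment a b \<subseteq> GG q c"
proof
  fix w assume w: "w \<in> closed_segment a b"
  have "w \<in> LL q c" using convex_LL assms(1,2) w
    by (meson closed_segment_subset subsetD)
  moreover obtain u where "0 \<le> u" "u \<le> 1" "inner (w - c) m = (1 - u) * inner (a - c) m + u * inner (b - c) m"
    using inner_seg[OF w] by blast
  then have "inner (w - c) m = 2" using assms(4,5) by (simp add: algebra_simps)
  ultimately show "w \<in> GG q c" using assms(3) by (auto simp: GG_def)
qed

lemma seg_infinite:
  assumes "a \<noteq> b" "closed_segment a b \<subseteq> S" shows "infinite S"
  using assms finite_subset finite_closed_segment by blast

lemma support_ineq: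
  assumes "w \<in> LL q c" "m \<in> NN q" "inner (z - c) m = 2"
  shows "inner (z - w) m \<ge> 0"
proof -
  have "inner (w - c) m \<le> 2" using assms(1,2) by (auto simp: LL_def)
  moreover have "z - w = (z - c) - (w - c)" by simp
  ultimately show ?thesis using assms(3) by (simp add: inner_diff_left)
qed

lemma NN_line:
  assumes "norm q = 2" shows "NN q = {(1/2) *\<^sub>R q}"
proof
  show "NN q \<subseteq> {(1/2) *\<^sub>R q}"
  proof
    fix m assume m: "m \<in> NN q"
    then have m1: "norm m = 1" and qm: "inner q m \<ge> 2" by (auto simp: NN_def)
    have "inner q m \<le> norm q * norm m" by (rule norm_cauchy_schwarz)
    then have "inner q m = norm q * norm m" using qm m1 assms by simp
    then have "norm q *\<^sub>R m = norm m *\<^sub>R q" using norm_cauchy_schwarz_eq by blast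
    then have "2 *\<^sub>R m = q" using m1 assms by simp
    then have "m = (1/2) *\<^sub>R q" by (metis scaleR_scaleR nonzero_divide_eq_eq zero_neq_numeral scaleR_one divide_self_if mult.commute times_divide_eq_left)
    then show "m \<in> {(1/2) *\<^sub>R q}" by simp
  qed
  show "{(1/2) *\<^sub>R q} \<subseteq> NN q"
    using assms by (simp add: NN_def inner_commute power2_norm_eq_inner[symmetric] power2_eq_square)
qed

lemma three_elems:
  assumes "finite S" "\<not> card S \<le> 2"
  obtains x y z where "x \<in> S" "y \<in> S" "z \<in> S" "x \<noteq> y" "x \<noteq> z" "y \<noteq> z"
proof -
  have "card S \<ge> 3" using assms by simp
  then have "S \<noteq> {}" by auto
  then obtain x where x: "x \<in> S" by blast
  have c1: "card (S - {x}) \<ge> 2" using assms x by (simp add: card_Diff_singleton)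
  then have "S - {x} \<noteq> {}" by (metis card.empty not_numeral_le_zero)
  then obtain y where y: "y \<in> S - {x}" by blast
  have "card (S - {x} - {y}) \<ge> 1" using c1 y assms by (simp add: card_Diff_singleton)
  then have "S - {x} - {y} \<noteq> {}" by (metis card.empty not_one_le_zero)
  then obtain z where z: "z \<in> S - {x} - {y}" by blast
  show ?thesis using that x y z by blast
qed


lemma rot_rot[simp]: "rot (rot x) = - x"
  by (simp add: vec2_eq)

lemma unit_perp2:
  fixes a b v :: "real^2"
  assumes "norm a = 1" "norm b = 1" "v \<noteq> 0" "inner v a = 0" "inner v b = 0"
  shows "b = a \<or> b = - a"
proof -
  define u where "u = (1 / norm v) *\<^sub>R v"
  have u1: "norm u = 1" using assms(3) by (simp add: u_def)
  have "inner a (rot (rot u)) = 0" using assms(4) by (simp add: u_def inner_commute)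
  then have "a = rot u \<or> a = - rot u" using unit_perp[OF norm_rot[of u, unfolded u1] assms(1)] by simp
  moreover have "inner b (rot (rot u)) = 0" using assms(5) by (simp add: u_def inner_commute)
  then have "b = rot u \<or> b = - rot u" using unit_perp[OF norm_rot[of u, unfolded u1] assms(2)] by simp
  ultimately show ?thesis by auto
qed

lemma perp_decomp:
  assumes "norm d = 1" "inner v d = 0"
  shows "v = inner v (rot d) *\<^sub>R rot d"
  using decomp2[OF assms(1), of v] assms(2) by simp

lemma k_nonzero:
  assumes "norm d = 1" "inner q d = 2" "norm q > 2"
  shows "inner q (rot d) \<noteq> 0" and "q - 2 *\<^sub>R d = inner q (rot d) *\<^sub>R rot d"
proof -
  have "(norm q)^2 = 4 + (inner q (rot d))^2" using norm_sq_decomp[OF assms(1), of q] assms(2) by simp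
  moreover have "(norm q)^2 > 2^2" using assms(3) by (intro power_strict_mono) auto
  then have "(norm q)^2 > 4" by simp
  ultimately show "inner q (rot d) \<noteq> 0" by auto
  show "q - 2 *\<^sub>R d = inner q (rot d) *\<^sub>R rot d"
    using decomp2[OF assms(1), of q] assms(2) by (simp add: algebra_simps)
qed

lemma opposite_sides:
  assumes d1: "norm d = 1" and a1: "norm a = 1" and b1: "norm b = 1"
    and v: "v \<noteq> 0" "inner v d = 0" "inner v a \<ge> 0" "inner v b \<le> 0"
    and ad: "a \<noteq> d" "a \<noteq> - d" and bd: "b \<noteq> d" "b \<noteq> - d" and k: "k \<noteq> (0::real)"
  shows "k * inner (rot d) a > 0 \<or> k * inner (rot d) b > 0"
proof -
  define l where "l = inner v (rot d)"
  have vv: "v = l *\<^sub>R rot d" using perp_decomp[OF d1 v(2)] by (simp add: l_def)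
  have l0: "l \<noteq> 0" using vv v(1) by auto
  have ra: "inner (rot d) a \<noteq> 0"
  proof
    assume "inner (rot d) a = 0"
    then have "inner a (rot d) = 0" by (simp add: inner_commute)
    then show False using unit_perp[OF d1 a1] ad by auto
  qed
  have rb: "inner (rot d) b \<noteq> 0"
  proof
    assume "inner (rot d) b = 0"
    then have "inner b (rot d) = 0" by (simp add: inner_commute)
    then show False using unit_perp[OF d1 b1] bd by auto
  qed
  have "l * inner (rot d) a \<ge> 0" using v(3) vv by simp
  then have pa: "l * inner (rot d) a > 0" using l0 ra by (simp add: less_le)
  have "l * inner (rot d) b \<le> 0" using v(4) vv by simp
  then have pb: "l * inner (rot d) b < 0" using l0 rb by (simp add: less_le)
  show ?thesis using pa pb k by (auto simp: zero_less_mult_iff mult_less_0_iff)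
qed

lemma cont_pos_nbhd:
  fixes g :: "real \<Rightarrow> real"
  assumes "continuous (at 0) g" "g 0 > 0"
  shows "\<exists>e>0. \<forall>s. \<bar>s\<bar> < e \<longrightarrow> g s > 0"
proof -
  obtain e where e: "e > 0" "\<forall>x'. dist x' 0 < e \<longrightarrow> dist (g x') (g 0) < g 0"
    using assms(1) assms(2) unfolding continuous_at_eps_delta by blast
  have "\<forall>s. \<bar>s\<bar> < e \<longrightarrow> g s > 0"
  proof (intro allI impI)
    fix s :: real assume "\<bar>s\<bar> < e"
    then have "dist (g s) (g 0) < g 0" using e(2) by (simp add: dist_real_def)
    then show "g s > 0" by (simp add: dist_real_def abs_less_iff)
  qed
  then show ?thesis using e(1) by blast
qed

lemma inside_lemma:
  assumes d1: "norm d = 1" and n1: "norm n = 1" and qd: "inner q d = 2" and B: "inner (q - 2 *\<^sub>R d) n > 0"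
  shows "\<exists>e>0. \<forall>s. 0 < s \<and> s < e \<longrightarrow> inner q ((1-s) *\<^sub>R d + s *\<^sub>R n) > 2 * norm ((1-s) *\<^sub>R d + s *\<^sub>R n)"
proof -
  define A where "A = inner q n - 2"
  define c where "c = inner d n"
  define BB where "BB = inner (q - 2 *\<^sub>R d) n"
  define C where "C = A^2 - 8 * (1 - c)"
  have BBe: "BB = A + 2 * (1 - c)" by (simp add: BB_def A_def c_def inner_diff_left algebra_simps)
  define e where "e = min (1 / (\<bar>A\<bar> + 1)) (4 * BB / (\<bar>C\<bar> + 1))"
  have BBp: "BB > 0" using B by (simp add: BB_def)
  have e0: "e > 0" using BBp by (simp add: e_def)
  have "\<forall>s. 0 < s \<and> s < e \<longrightarrow> inner q ((1-s) *\<^sub>R d + s *\<^sub>R n) > 2 * norm ((1-s) *\<^sub>R d + s *\<^sub>R n)"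
  proof (intro allI impI)
    fix s :: real assume s: "0 < s \<and> s < e"
    define y where "y = (1-s) *\<^sub>R d + s *\<^sub>R n"
    have qy: "inner q y = 2 + s * A" using qd by (simp add: y_def A_def inner_add_right algebra_simps)
    have dd: "inner d d = 1" using d1 by (simp add: power2_norm_eq_inner[symmetric])
    have nn: "inner n n = 1" using n1 by (simp add: power2_norm_eq_inner[symmetric])
    have yy: "inner y y = (1-s)^2 * inner d d + 2 * s * (1 - s) * inner d n + s^2 * inner n n"
      by (simp add: y_def inner_add_left inner_add_right inner_commute power2_eq_square algebra_simps)
    have ny: "(norm y)^2 = (1-s)^2 + 2 * s * (1 - s) * c + s^2"
      using yy dd nn by (simp add: power2_norm_eq_inner c_def)
    have key: "(inner q y)^2 - (2 * norm y)^2 = s * (4 * BB + s * C)"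
      unfolding qy power_mult_distrib ny BBe C_def by (simp add: power2_eq_square algebra_simps)
    have sA: "s * \<bar>A\<bar> < 1"
    proof -
      have "s < 1 / (\<bar>A\<bar> + 1)" using s by (simp add: e_def)
      then have "s * (\<bar>A\<bar> + 1) < 1" by (simp add: field_simps)
      then show ?thesis using s by (simp add: algebra_simps)
    qed
    have qpos: "inner q y > 0"
    proof -
      have "- (s * A) \<le> s * \<bar>A\<bar>" using mult_left_mono[of "-A" "\<bar>A\<bar>" s] s by simp
      then show ?thesis using qy sA by linarith
    qed
    have sC: "s * \<bar>C\<bar> < 4 * BB"
    proof -
      have "s < 4 * BB / (\<bar>C\<bar> + 1)" using s by (simp add: e_def)
      then have "s * (\<bar>C\<bar> + 1) < 4 * BB" by (simp add: field_simps)
      then show ?thesis using s by (simp add: algebra_simps)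
    qed
    have "- (s * C) \<le> s * \<bar>C\<bar>" using mult_left_mono[of "-C" "\<bar>C\<bar>" s] s by simp
    then have "4 * BB + s * C > 0" using sC by linarith
    then have "(inner q y)^2 - (2 * norm y)^2 > 0" using key s by simp
    then have "(2 * norm y)^2 < (inner q y)^2" by simp
    then have "2 * norm y < inner q y"
      by (rule power2_less_imp_less[OF _ less_imp_le[OF qpos]])
    then show "inner q ((1-s) *\<^sub>R d + s *\<^sub>R n) > 2 * norm ((1-s) *\<^sub>R d + s *\<^sub>R n)" by (simp add: y_def)
  qed
  then show ?thesis using e0 by blast
qed

lemma crossing_point:
  fixes \<phi> :: "real \<Rightarrow> real"
  assumes cont: "continuous_on {0..1} \<phi>" and p0: "\<phi> 0 \<ge> 0" and p1: "\<phi> 1 \<le> 0"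
  obtains T where "0 \<le> T" "T \<le> 1" "\<phi> T = 0"
    "T = 0 \<Longrightarrow> \<forall>e>0. \<exists>t. 0 < t \<and> t < e \<and> \<phi> t < 0"
    "T = 1 \<Longrightarrow> \<forall>t. 0 \<le> t \<and> t < 1 \<longrightarrow> \<phi> t \<ge> 0"
proof (cases "{t\<in>{0..1}. \<phi> t < 0} = {}")
  case True
  then have "\<forall>t. 0 \<le> t \<and> t < 1 \<longrightarrow> \<phi> t \<ge> 0" by fastforce
  moreover have "\<phi> 1 = 0" using True p1 by fastforce
  ultimately show ?thesis using that[of 1] by auto
next
  case False
  define X where "X = {t\<in>{0..1}. \<phi> t < 0}"
  define T where "T = Inf X"
  have Xne: "X \<noteq> {}" using False by (simp add: X_def)
  have Xbdd: "bdd_below X" by (auto simp: X_def bdd_below_def)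
  have c0: "continuous_on {0..1} (\<lambda>t. 0::real)" by simp
  have cl: "closed {t \<in> {0..1}. \<phi> t \<le> 0}"
    using continuous_on_closed_Collect_le[OF cont c0] by simp
  have "X \<subseteq> {t \<in> {0..1}. \<phi> t \<le> 0}" by (auto simp: X_def)
  then have "closure X \<subseteq> {t \<in> {0..1}. \<phi> t \<le> 0}" using cl closure_minimal by blast
  then have TX: "T \<in> {t \<in> {0..1}. \<phi> t \<le> 0}" using closure_contains_Inf[OF Xne Xbdd] by (auto simp: T_def)
  then have T01: "0 \<le> T" "T \<le> 1" "\<phi> T \<le> 0" by auto
  have below: "\<phi> t \<ge> 0" if "0 \<le> t" "t < T" for t
  proof (rule ccontr)
    assume "\<not> \<phi> t \<ge> 0"
    then have "t \<in> X" using that T01 by (auto simp: X_def)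
    then have "T \<le> t" unfolding T_def using Xbdd by (rule cInf_lower)
    then show False using that by simp
  qed
  have ge: "\<phi> T \<ge> 0"
  proof (cases "T = 0")
    case True then show ?thesis using p0 by simp
  next
    case False
    then have Tp: "T > 0" using T01 by simp
    have cl2: "closed {t \<in> {0..1}. 0 \<le> \<phi> t}"
      using continuous_on_closed_Collect_le[OF c0 cont] by simp
    have "{0..<T} \<subseteq> {t \<in> {0..1}. 0 \<le> \<phi> t}" using below T01 by auto
    then have "closure {0..<T} \<subseteq> {t \<in> {0..1}. 0 \<le> \<phi> t}" using cl2 closure_minimal by blast
    moreover have "T \<in> closure {0..<T}" using Tp by simp
    ultimately show ?thesis by auto
  qed
  have z: "\<phi> T = 0" using ge T01 by simp
  have c0: "\<forall>e>0. \<exists>t. 0 < t \<and> t < e \<and> \<phi> t < 0" if "T = 0"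
  proof (intro allI impI)
    fix e :: real assume "e > 0"
    then have "Inf X < e" using that by (simp add: T_def)
    then obtain x where "x \<in> X" "x < e" using cInf_less_iff[OF Xne Xbdd] by blast
    moreover then have "x \<noteq> 0" using p0 by (auto simp: X_def)
    ultimately show "\<exists>t. 0 < t \<and> t < e \<and> \<phi> t < 0" by (intro exI[of _ x]) (auto simp: X_def)
  qed
  have c1: "\<forall>t. 0 \<le> t \<and> t < 1 \<longrightarrow> \<phi> t \<ge> 0" if "T = 1"
    using below that by auto
  show ?thesis using that[OF T01(1,2) z c0 c1] by blast
qed


lemma circle_line:
  fixes a :: "real^2"
  assumes "a \<noteq> 0"
  shows "finite {d. norm d = 1 \<and> inner a d = b} \<and> card {d. norm d = 1 \<and> inner a d = b} \<le> 2"
proof (cases "{d. norm d = 1 \<and> inner a d = b} = {}")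
  case True then show ?thesis by (simp only: True) simp
next
  case False
  then obtain d1 where d1: "norm d1 = 1" "inner a d1 = b" by auto
  define u where "u = (1 / norm a) *\<^sub>R a"
  have u1: "norm u = 1" using assms by (simp add: u_def)
  define r where "r = rot u"
  have r1: "norm r = 1" using u1 by (simp add: r_def)
  have sub: "{d. norm d = 1 \<and> inner a d = b} \<subseteq> {d1, d1 - (2 * inner d1 r) *\<^sub>R r}"
  proof
    fix d assume d: "d \<in> {d. norm d = 1 \<and> inner a d = b}"
    then have "inner a (d - d1) = 0" using d1 by (simp add: inner_diff_right)
    then have "inner (d - d1) u = 0" by (simp add: u_def inner_commute)
    then have dd: "d - d1 = inner (d - d1) r *\<^sub>R r" using perp_decomp[OF u1] by (simp add: r_def)
    define l where "l = inner (d - d1) r"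
    have deq: "d = d1 + l *\<^sub>R r" using dd by (simp add: l_def algebra_simps)
    have "1 = (norm d)^2" using d by simp
    also have "\<dots> = inner d d" by (simp add: power2_norm_eq_inner)
    also have "\<dots> = inner d1 d1 + 2 * l * inner d1 r + l^2 * inner r r"
      by (simp add: deq inner_add_left inner_add_right inner_commute power2_eq_square algebra_simps)
    also have "\<dots> = 1 + 2 * l * inner d1 r + l^2"
      using d1 r1 by (simp add: power2_norm_eq_inner[symmetric])
    finally have "l * (l + 2 * inner d1 r) = 0" by (simp add: power2_eq_square algebra_simps)
    then have "l = 0 \<or> l = - (2 * inner d1 r)" by auto
    then show "d \<in> {d1, d1 - (2 * inner d1 r) *\<^sub>R r}" using deq by auto
  qed
  have "finite {d1, d1 - (2 * inner d1 r) *\<^sub>R r}" by simp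
  moreover have "card {d1, d1 - (2 * inner d1 r) *\<^sub>R r} \<le> 2" by (simp add: card_insert_le_m1)
  ultimately show ?thesis using sub by (meson card_mono finite_subset order_trans)
qed

lemma cone_lemma:
  fixes q a b m :: "real^2"
  assumes q2: "norm q > 2" and a: "norm a = 1" "inner q a = 2" and b: "norm b = 1" "inner q b = 2"
    and ab: "a \<noteq> b" and m: "norm m = 1" "inner q m \<ge> 2"
  shows "\<exists>\<alpha> \<beta>. \<alpha> \<ge> 0 \<and> \<beta> \<ge> 0 \<and> m = \<alpha> *\<^sub>R a + \<beta> *\<^sub>R b"
proof -
  have nq: "norm q > 0" using q2 by linarith
  have q0: "q \<noteq> 0"
  proof
    assume "q = 0" then show False using q2 by simp
  qed
  define u where "u = (1 / norm q) *\<^sub>R q"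
  have u1: "norm u = 1" using q0 by (simp add: u_def)
  define x0 where "x0 = 2 / norm q"
  have x0p: "x0 > 0" using nq by (simp add: x0_def)
  have xa: "inner a u = x0" using a(2) by (simp add: u_def x0_def inner_commute)
  have xb: "inner b u = x0" using b(2) by (simp add: u_def x0_def inner_commute)
  define ya where "ya = inner a (rot u)"
  define yb where "yb = inner b (rot u)"
  have ea: "1 = x0^2 + ya^2" using norm_sq_decomp[OF u1, of a] a(1) xa by (simp add: ya_def)
  have eb: "1 = x0^2 + yb^2" using norm_sq_decomp[OF u1, of b] b(1) xb by (simp add: yb_def)
  have "ya \<noteq> yb"
  proof
    assume "ya = yb"
    then have "a = b" using decomp2[OF u1, of a] decomp2[OF u1, of b] xa xb by (simp add: ya_def yb_def)
    then show False using ab by simp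
  qed
  moreover have "ya^2 = yb^2" using ea eb by simp
  ultimately have yb: "yb = - ya" by (metis power2_eq_iff)
  have ya0: "ya \<noteq> 0" using \<open>ya \<noteq> yb\<close> yb by auto
  define xm where "xm = inner m u"
  define ym where "ym = inner m (rot u)"
  have xm: "xm \<ge> x0"
  proof -
    have "inner m u = inner q m / norm q" by (simp add: u_def inner_commute)
    then show ?thesis using m(2) nq by (simp add: xm_def x0_def divide_right_mono)
  qed
  have em: "1 = xm^2 + ym^2" using norm_sq_decomp[OF u1, of m] m(1) by (simp add: xm_def ym_def)
  define \<alpha> where "\<alpha> = (xm / x0 + ym / ya) / 2"
  define \<beta> where "\<beta> = (xm / x0 - ym / ya) / 2"
  have "x0^2 \<le> xm^2" using xm x0p by (simp add: power_mono)
  have ym2: "ym^2 = 1 - xm^2" using em by simp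
  have ya2: "ya^2 = 1 - x0^2" using ea by simp
  have e1: "ym^2 * x0^2 = x0^2 - xm^2 * x0^2" unfolding ym2 by (simp add: algebra_simps)
  have e2: "xm^2 * ya^2 = xm^2 - xm^2 * x0^2" unfolding ya2 by (simp add: algebra_simps)
  have "ym^2 * x0^2 \<le> xm^2 * ya^2" unfolding e1 e2 using \<open>x0^2 \<le> xm^2\<close> by linarith
  then have "(\<bar>ym\<bar> * x0)^2 \<le> (xm * \<bar>ya\<bar>)^2" by (simp add: power_mult_distrib)
  then have "\<bar>ym\<bar> * x0 \<le> xm * \<bar>ya\<bar>"
    by (rule power2_le_imp_le) (use x0p xm in auto)
  then have "\<bar>ym\<bar> / \<bar>ya\<bar> \<le> xm / x0" using x0p ya0 by (simp add: field_simps)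
  then have key: "\<bar>ym / ya\<bar> \<le> xm / x0" by (simp add: abs_divide)
  have "xm / x0 + ym / ya \<ge> 0" using key abs_ge_minus_self[of "ym/ya"] by linarith
  then have al: "\<alpha> \<ge> 0" unfolding \<alpha>_def by simp
  have "xm / x0 - ym / ya \<ge> 0" using key abs_ge_self[of "ym/ya"] by linarith
  then have be: "\<beta> \<ge> 0" unfolding \<beta>_def by simp
  have c1: "inner (\<alpha> *\<^sub>R a + \<beta> *\<^sub>R b) u = xm"
    using xa xb x0p by (simp add: inner_add_left \<alpha>_def \<beta>_def field_simps)
  have c2: "inner (\<alpha> *\<^sub>R a + \<beta> *\<^sub>R b) (rot u) = ym"
    using ya0 by (simp add: inner_add_left \<alpha>_def \<beta>_def yb ya_def[symmetric] yb_def[symmetric] field_simps)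
  have "m = \<alpha> *\<^sub>R a + \<beta> *\<^sub>R b"
    using decomp2[OF u1, of m] decomp2[OF u1, of "\<alpha> *\<^sub>R a + \<beta> *\<^sub>R b"] c1 c2
    by (simp add: xm_def ym_def)
  then show ?thesis using al be by blast
qed



lemma NN_not_antipodal:
  assumes "m1 \<in> NN q" "m2 \<in> NN q" shows "m2 \<noteq> - m1"
proof
  assume "m2 = - m1"
  then show False using assms by (auto simp: NN_def)
qed

lemma arc_infinite:
  assumes m1: "m1 \<in> NN q1" "m1 \<in> NN q2" and m2: "m2 \<in> NN q1" "m2 \<in> NN q2" and ne: "m1 \<noteq> m2"
  shows "infinite (NN q1 \<inter> NN q2)"
proof
  assume fin: "finite (NN q1 \<inter> NN q2)"
  define y where "y t = (1 - t) *\<^sub>R m1 + t *\<^sub>R m2" for t :: real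
  define g where "g t = (1 / norm (y t)) *\<^sub>R y t" for t
  have u1: "norm m1 = 1" "norm m2 = 1" using m1 m2 by (auto simp: NN_def)
  have ny: "norm (y t) \<le> 1" if "0 \<le> t" "t \<le> 1" for t
  proof -
    have "norm (y t) \<le> norm ((1 - t) *\<^sub>R m1) + norm (t *\<^sub>R m2)" unfolding y_def by (rule norm_triangle_ineq)
    also have "\<dots> = 1" using that u1 by simp
    finally show ?thesis .
  qed
  have qy: "inner q (y t) \<ge> 2" if "0 \<le> t" "t \<le> 1" "m1 \<in> NN q" "m2 \<in> NN q" for t q
  proof -
    have "inner q (y t) = (1 - t) * inner q m1 + t * inner q m2" by (simp add: y_def inner_add_right)
    also have "\<dots> \<ge> (1 - t) * 2 + t * 2"
      using that by (intro add_mono mult_left_mono) (auto simp: NN_def)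
    finally show ?thesis by (simp add: algebra_simps)
  qed
  have y0: "norm (y t) > 0" if "0 \<le> t" "t \<le> 1" for t
  proof -
    have "inner q1 (y t) \<ge> 2" using qy[OF that m1(1) m2(1)] .
    then have "y t \<noteq> 0" by auto
    then show ?thesis by simp
  qed
  have gN: "g t \<in> NN q" if "0 \<le> t" "t \<le> 1" "m1 \<in> NN q" "m2 \<in> NN q" for t q
  proof -
    have "norm (g t) = 1" using y0[OF that(1,2)] by (simp add: g_def)
    moreover have "inner q (g t) = inner q (y t) / norm (y t)" by (simp add: g_def)
    moreover have "inner q (y t) / norm (y t) \<ge> 2"
    proof -
      have "inner q (y t) \<ge> 2 * norm (y t)" using qy[OF that] ny[OF that(1,2)] by linarith
      then show ?thesis using y0[OF that(1,2)] by (simp add: pos_le_divide_eq)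
    qed
    ultimately show ?thesis by (simp add: NN_def)
  qed
  define k where "k = inner m2 (rot m1)"
  have k0: "k \<noteq> 0"
  proof
    assume "k = 0"
    then have "inner m2 (rot m1) = 0" by (simp add: k_def)
    then have "m2 = m1 \<or> m2 = - m1" using unit_perp[OF u1] by simp
    then show False using ne NN_not_antipodal[OF m1(1) m2(1)] by auto
  qed
  have inj: "inj_on g {0..1}"
  proof (rule inj_onI)
    fix s t assume s: "s \<in> {0..1::real}" and t: "t \<in> {0..1::real}" and eq: "g s = g t"
    have gi: "inner (g x) v = inner (y x) v / norm (y x)" for x v by (simp add: g_def)
    have r1: "inner (g x) (rot m1) = x * k / norm (y x)" for x
    proof -
      have "inner (y x) (rot m1) = (1-x) * inner m1 (rot m1) + x * inner m2 (rot m1)"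
        by (simp add: y_def inner_add_left)
      then show ?thesis by (simp add: gi k_def)
    qed
    have r2: "inner (g x) (rot m2) = - ((1 - x) * k) / norm (y x)" for x
    proof -
      have "inner (y x) (rot m2) = (1-x) * inner m1 (rot m2) + x * inner m2 (rot m2)"
        by (simp add: y_def inner_add_left)
      moreover have "inner m1 (rot m2) = - k" unfolding k_def
        by (simp add: inner_rot_swap[of m1 m2] inner_commute)
      ultimately show ?thesis by (simp add: gi)
    qed
    have ys: "norm (y s) > 0" and yt: "norm (y t) > 0" using y0 s t by auto
    have "(s / norm (y s)) * k = (t / norm (y t)) * k" using r1[of s] r1[of t] eq by simp
    then have "s / norm (y s) = t / norm (y t)" using k0 by (metis mult_right_cancel)
    then have e1: "s * norm (y t) = t * norm (y s)" using ys yt by (simp add: frac_eq_eq)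
    have "((1 - s) / norm (y s)) * k = ((1 - t) / norm (y t)) * k" using r2[of s] r2[of t] eq by simp
    then have "(1 - s) / norm (y s) = (1 - t) / norm (y t)" using k0 by (metis mult_right_cancel)
    then have e2: "(1 - s) * norm (y t) = (1 - t) * norm (y s)" using ys yt by (simp add: frac_eq_eq)
    have "norm (y t) = norm (y s)" using e1 e2 by (simp add: algebra_simps)
    then show "s = t" using e1 ys by simp
  qed
  have "g ` {0..1} \<subseteq> NN q1 \<inter> NN q2" using gN m1 m2 by auto
  then have "finite (g ` {0..1})" using fin finite_subset by blast
  then have "finite {0..1::real}" using inj finite_image_iff by blast
  then show False using infinite_Icc[of 0 "1::real"] by simp
qed


lemma mid_point_lemma:
  assumes a: "a \<in> closed_segment b d" "a \<noteq> b" "a \<noteq> d"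
    and "b \<in> LL q c" "d \<in> LL q c" "n \<in> NN q" "inner (a - c) n = 2"
  shows "inner (b - c) n = 2" "inner (d - c) n = 2"
proof -
  obtain u where u: "0 \<le> u" "u \<le> 1" "inner (a - c) n = (1 - u) * inner (b - c) n + u * inner (d - c) n"
    using inner_seg[OF a(1)] by blast
  obtain u' where u': "0 \<le> u'" "u' \<le> 1" "a = (1 - u') *\<^sub>R b + u' *\<^sub>R d"
    using a(1) by (auto simp: closed_segment_def)
  have "a - c = (1 - u') *\<^sub>R (b - c) + u' *\<^sub>R (d - c)" using u'(3) by (simp add: algebra_simps)
  then have ia: "inner (a - c) n = (1 - u') * inner (b - c) n + u' * inner (d - c) n"
    by (simp add: inner_add_left)
  have "u' \<noteq> 0" using u' a(2) by auto
  moreover have "u' \<noteq> 1" using u' a(3) by auto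
  ultimately have up: "0 < u'" "u' < 1" using u' by auto
  have B: "inner (b - c) n \<le> 2" and D: "inner (d - c) n \<le> 2" using assms(4-6) by (auto simp: LL_def)
  have "(1 - u') * (2 - inner (b - c) n) + u' * (2 - inner (d - c) n) = 0"
    using ia assms(7) by (simp add: algebra_simps)
  moreover have "(1 - u') * (2 - inner (b - c) n) \<ge> 0" using up B by simp
  moreover have "u' * (2 - inner (d - c) n) \<ge> 0" using up D by simp
  ultimately have "(1 - u') * (2 - inner (b - c) n) = 0" "u' * (2 - inner (d - c) n) = 0" by linarith+
  then show "inner (b - c) n = 2" "inner (d - c) n = 2" using up by auto
qed

lemma line_case:
  assumes q1: "norm q1 = 2" and fin: "finite (GG q1 c1 \<inter> GG q2 c2)"
  shows "card (GG q1 c1 \<inter> GG q2 c2) \<le> 2"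
proof (rule ccontr)
  define Z where "Z = GG q1 c1 \<inter> GG q2 c2"
  assume "\<not> card (GG q1 c1 \<inter> GG q2 c2) \<le> 2"
  then obtain x y z where xyz: "x \<in> Z" "y \<in> Z" "z \<in> Z" "x \<noteq> y" "x \<noteq> z" "y \<noteq> z"
    using three_elems[OF fin] unfolding Z_def by blast
  define m where "m = (1/2) *\<^sub>R q1"
  have NN1: "NN q1 = {m}" using NN_line[OF q1] by (simp add: m_def)
  have m1: "norm m = 1" using q1 by (simp add: m_def)
  have onl: "inner (w - c1) m = 2" if "w \<in> Z" for w
    using that NN1 by (auto simp: Z_def GG_def)
  have inLL1: "w \<in> LL q1 c1" if "w \<in> Z" for w using that by (auto simp: Z_def GG_def)
  have inLL2: "w \<in> LL q2 c2" if "w \<in> Z" for w using that by (auto simp: Z_def GG_def)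
  have col: "collinear {x, y, z}"
    unfolding collinear_def
  proof (intro exI[of _ "rot m"] ballI)
    fix a b assume "a \<in> {x, y, z}" "b \<in> {x, y, z}"
    then have "a \<in> Z" "b \<in> Z" using xyz by auto
    moreover have "inner (a - b) m = inner (a - c1) m - inner (b - c1) m" by (simp add: inner_diff_left)
    ultimately have "inner (a - b) m = 0" using onl by simp
    then show "\<exists>c. a - b = c *\<^sub>R rot m" using perp_decomp[OF m1] by blast
  qed
  have key: False if H: "a \<in> Z" "b \<in> Z" "d \<in> Z" "a \<noteq> b" "a \<noteq> d" "b \<noteq> d" "a \<in> closed_segment b d" for a b d
  proof -
    obtain n where n: "n \<in> NN q2" "inner (a - c2) n = 2" using H(1) unfolding Z_def GG_def by blast
    have "inner (b - c2) n = 2" "inner (d - c2) n = 2"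
      using mid_point_lemma[OF H(7) H(4,5) inLL2[OF H(2)] inLL2[OF H(3)] n] by auto
    then have s2: "closed_segment b d \<subseteq> GG q2 c2"
      using seg_in_GG[OF inLL2[OF H(2)] inLL2[OF H(3)] n(1)] by blast
    have s1: "closed_segment b d \<subseteq> GG q1 c1"
      using seg_in_GG[OF inLL1[OF H(2)] inLL1[OF H(3)], of m] onl H(2,3) NN1 by auto
    have "closed_segment b d \<subseteq> Z" unfolding Z_def using s1 s2 by (rule Int_greatest)
    then have "infinite Z" by (rule seg_infinite[OF H(6)])
    then show False using fin by (simp add: Z_def)
  qed
  have "between (y, z) x \<or> between (z, x) y \<or> between (x, y) z"
    using col collinear_between_cases by blast
  then show False
  proof (elim disjE)
    assume "between (y, z) x" then show False using key[of x y z] xyz by (simp add: between_mem_segment)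
  next
    assume "between (z, x) y" then show False using key[of y z x] xyz by (simp add: between_mem_segment)
  next
    assume "between (x, y) z" then show False using key[of z x y] xyz by (simp add: between_mem_segment)
  qed
qed

lemma antipodal_case:
  assumes fin: "finite (GG q1 c1 \<inter> GG q2 c2)" and z: "z \<in> GG q1 c1 \<inter> GG q2 c2"
    and n: "n \<in> NN q1" "inner (z - c1) n = 2" "- n \<in> NN q2" "inner (z - c2) (- n) = 2"
  shows "card (GG q1 c1 \<inter> GG q2 c2) \<le> 1"
proof -
  define Z where "Z = GG q1 c1 \<inter> GG q2 c2"
  have on: "inner (w - c1) n = 2 \<and> inner (w - c2) (- n) = 2" if "w \<in> Z" for w
  proof -
    have w1: "w \<in> LL q1 c1" and w2: "w \<in> LL q2 c2" using that by (auto simp: Z_def GG_def)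
    have "inner (z - w) n \<ge> 0" using support_ineq[OF w1 n(1,2)] .
    moreover have "inner (z - w) (- n) \<ge> 0" using support_ineq[OF w2 n(3,4)] .
    ultimately have "inner (z - w) n = 0" by simp
    then show ?thesis using n(2,4) by (simp add: inner_diff_left)
  qed
  have "\<forall>a\<in>Z. \<forall>b\<in>Z. a = b"
  proof (intro ballI, rule ccontr)
    fix a b assume ab: "a \<in> Z" "b \<in> Z" "a \<noteq> b"
    have a12: "a \<in> LL q1 c1" "a \<in> LL q2 c2" "b \<in> LL q1 c1" "b \<in> LL q2 c2" using ab by (auto simp: Z_def GG_def)
    have "closed_segment a b \<subseteq> GG q1 c1" using seg_in_GG[OF a12(1) a12(3) n(1)] on ab by auto
    moreover have "closed_segment a b \<subseteq> GG q2 c2" using seg_in_GG[OF a12(2) a12(4) n(3)] on ab by auto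
    ultimately have "closed_segment a b \<subseteq> Z" unfolding Z_def by (rule Int_greatest)
    then have "infinite Z" by (rule seg_infinite[OF ab(3)])
    then show False using fin by (simp add: Z_def)
  qed
  then show ?thesis using fin card_le_Suc0_iff_eq unfolding Z_def by (metis One_nat_def)
qed


locale twoc =
  fixes q1 q2 c1 c2 :: "real^2"
  assumes q1: "norm q1 > 2" and q2: "norm q2 > 2"
    and fin: "finite (GG q1 c1 \<inter> GG q2 c2)"
    and noanti: "\<And>z n. z \<in> GG q1 c1 \<inter> GG q2 c2 \<Longrightarrow> n \<in> NN q1 \<Longrightarrow> inner (z - c1) n = 2
       \<Longrightarrow> - n \<in> NN q2 \<Longrightarrow> inner (z - c2) (- n) = 2 \<Longrightarrow> False"
begin

definition "ZZ = GG q1 c1 \<inter> GG q2 c2"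
definition "Dl = c2 - c1"
definition "fh y = max (min (inner Dl y) (inner q1 y - 2 * norm y)) (2 * norm y - inner q2 y)"
definition "V1 z = {m \<in> NN q1. inner (z - c1) m = 2}"
definition "V2 z = {m \<in> NN q2. inner (z - c2) m = 2}"
definition "n1 z = (if V1 z \<inter> V2 z \<noteq> {} then (SOME m. m \<in> V1 z \<inter> V2 z) else (SOME m. m \<in> V1 z))"
definition "n2 z = (if V1 z \<inter> V2 z \<noteq> {} then n1 z else (SOME m. m \<in> V2 z))"

lemma ZZ_LL: "z \<in> ZZ \<Longrightarrow> z \<in> LL q1 c1 \<and> z \<in> LL q2 c2"
  by (auto simp: ZZ_def GG_def)

lemma V_ne: "z \<in> ZZ \<Longrightarrow> V1 z \<noteq> {} \<and> V2 z \<noteq> {}"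
  by (auto simp: ZZ_def GG_def V1_def V2_def)

lemma n1_V: "z \<in> ZZ \<Longrightarrow> n1 z \<in> V1 z"
proof -
  assume z: "z \<in> ZZ"
  show ?thesis
  proof (cases "V1 z \<inter> V2 z \<noteq> {}")
    case True
    then have "(SOME m. m \<in> V1 z \<inter> V2 z) \<in> V1 z \<inter> V2 z" by (meson ex_in_conv someI_ex)
    then show ?thesis using True by (simp add: n1_def)
  next
    case False
    have "V1 z \<noteq> {}" using V_ne[OF z] by simp
    then have "(SOME m. m \<in> V1 z) \<in> V1 z" by (meson ex_in_conv someI_ex)
    then show ?thesis using False by (simp add: n1_def)
  qed
qed

lemma n2_V: "z \<in> ZZ \<Longrightarrow> n2 z \<in> V2 z"
proof -
  assume z: "z \<in> ZZ"
  show ?thesis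
  proof (cases "V1 z \<inter> V2 z \<noteq> {}")
    case True
    then have "(SOME m. m \<in> V1 z \<inter> V2 z) \<in> V1 z \<inter> V2 z" by (meson ex_in_conv someI_ex)
    then show ?thesis using True by (simp add: n2_def n1_def)
  next
    case False
    have "V2 z \<noteq> {}" using V_ne[OF z] by simp
    then have "(SOME m. m \<in> V2 z) \<in> V2 z" by (meson ex_in_conv someI_ex)
    then show ?thesis using False by (simp add: n2_def)
  qed
qed

lemma n_deg: "n1 z \<noteq> n2 z \<Longrightarrow> V1 z \<inter> V2 z = {}"
  by (auto simp: n2_def split: if_splits)

lemma n1_props: "z \<in> ZZ \<Longrightarrow> norm (n1 z) = 1 \<and> inner q1 (n1 z) \<ge> 2 \<and> inner (z - c1) (n1 z) = 2 \<and> n1 z \<in> NN q1"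
  using n1_V by (auto simp: V1_def NN_def)

lemma n2_props: "z \<in> ZZ \<Longrightarrow> norm (n2 z) = 1 \<and> inner q2 (n2 z) \<ge> 2 \<and> inner (z - c2) (n2 z) = 2 \<and> n2 z \<in> NN q2"
  using n2_V by (auto simp: V2_def NN_def)

lemma Dl_inner: "inner Dl m = inner (z - c1) m - inner (z - c2) m"
  by (simp add: Dl_def inner_diff_left)

lemma Dl_n1: assumes "z \<in> ZZ" "n1 z \<in> NN q2" shows "inner Dl (n1 z) \<ge> 0"
proof -
  have "inner (z - c2) (n1 z) \<le> 2" using ZZ_LL[OF assms(1)] assms(2) by (auto simp: LL_def)
  then show ?thesis using n1_props[OF assms(1)] Dl_inner[of "n1 z" z] by simp
qed

lemma Dl_n2: assumes "z \<in> ZZ" "n2 z \<in> NN q1" shows "inner Dl (n2 z) \<le> 0"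
proof -
  have "inner (z - c1) (n2 z) \<le> 2" using ZZ_LL[OF assms(1)] assms(2) by (auto simp: LL_def)
  then show ?thesis using n2_props[OF assms(1)] Dl_inner[of "n2 z" z] by simp
qed

lemma P2a: assumes "z \<in> ZZ" "n1 z \<noteq> n2 z" "n1 z \<in> NN q2" shows "inner Dl (n1 z) > 0"
proof (rule ccontr)
  assume "\<not> inner Dl (n1 z) > 0"
  then have "inner Dl (n1 z) = 0" using Dl_n1[OF assms(1,3)] by simp
  then have "inner (z - c2) (n1 z) = 2" using n1_props[OF assms(1)] Dl_inner[of "n1 z" z] by simp
  then have "n1 z \<in> V2 z" using assms(3) by (simp add: V2_def)
  then show False using n_deg[OF assms(2)] n1_V[OF assms(1)] by auto
qed

lemma P2b: assumes "z \<in> ZZ" "n1 z \<noteq> n2 z" "n2 z \<in> NN q1" shows "inner Dl (n2 z) < 0"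
proof (rule ccontr)
  assume "\<not> inner Dl (n2 z) < 0"
  then have "inner Dl (n2 z) = 0" using Dl_n2[OF assms(1,3)] by simp
  then have "inner (z - c1) (n2 z) = 2" using n2_props[OF assms(1)] Dl_inner[of "n2 z" z] by simp
  then have "n2 z \<in> V1 z" using assms(3) by (simp add: V1_def)
  then show False using n_deg[OF assms(2)] n2_V[OF assms(1)] by auto
qed

lemma nonanti: assumes "z \<in> ZZ" shows "n2 z \<noteq> - n1 z"
proof
  assume h: "n2 z = - n1 z"
  show False using noanti[of z "n1 z"] assms n1_props[OF assms] n2_props[OF assms] h
    by (auto simp: ZZ_def)
qed

lemma fh_n1: assumes "z \<in> ZZ" shows "fh (n1 z) \<ge> 0"
proof (cases "n1 z \<in> NN q2")
  case True
  then have "inner Dl (n1 z) \<ge> 0" using Dl_n1[OF assms] by simp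
  moreover have "inner q1 (n1 z) - 2 * norm (n1 z) \<ge> 0" using n1_props[OF assms] by simp
  ultimately show ?thesis by (simp add: fh_def)
next
  case False
  then have "inner q2 (n1 z) < 2" using n1_props[OF assms] by (auto simp: NN_def)
  then show ?thesis using n1_props[OF assms] by (simp add: fh_def)
qed

lemma fh_n2: assumes "z \<in> ZZ" shows "fh (n2 z) \<le> 0"
proof -
  have a: "2 * norm (n2 z) - inner q2 (n2 z) \<le> 0" using n2_props[OF assms] by simp
  have "min (inner Dl (n2 z)) (inner q1 (n2 z) - 2 * norm (n2 z)) \<le> 0"
  proof (cases "n2 z \<in> NN q1")
    case True then show ?thesis using Dl_n2[OF assms] by simp
  next
    case False
    then have "inner q1 (n2 z) < 2" using n2_props[OF assms] by (auto simp: NN_def)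
    then show ?thesis using n2_props[OF assms] by simp
  qed
  then show ?thesis using a by (simp add: fh_def)
qed

lemma fh_hom: assumes "a \<ge> 0" shows "fh (a *\<^sub>R y) = a * fh y"
proof -
  have "fh (a *\<^sub>R y) = max (min (a * inner Dl y) (a * (inner q1 y - 2 * norm y))) (a * (2 * norm y - inner q2 y))"
    using assms by (simp add: fh_def algebra_simps)
  also have "\<dots> = a * fh y" using assms
    by (simp add: fh_def max_mult_distrib_left min_mult_distrib_left)
  finally show ?thesis .
qed

lemma fh_cont: "continuous_on S fh"
  unfolding fh_def by (intro continuous_intros)

end


lemma unit_mult:
  fixes a b :: "real^2"
  assumes "norm a = 1" "norm b = 1" "b = c *\<^sub>R a" shows "b = a \<or> b = - a"
proof -
  have "\<bar>c\<bar> = 1" using assms by simp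
  then have "c = 1 \<or> c = -1" by auto
  then show ?thesis using assms(3) by auto
qed

context twoc begin

definition "yp z t = (1 - t) *\<^sub>R n1 z + t *\<^sub>R n2 z"

lemma yp_0[simp]: "yp z 0 = n1 z" and yp_1[simp]: "yp z 1 = n2 z"
  by (simp_all add: yp_def)

lemma yp_nz: assumes z: "z \<in> ZZ" and t: "0 \<le> t" "t \<le> 1" shows "yp z t \<noteq> 0"
proof
  assume h: "yp z t = 0"
  then have e: "(1 - t) *\<^sub>R n1 z = - (t *\<^sub>R n2 z)" by (simp add: yp_def eq_neg_iff_add_eq_0)
  have "norm ((1 - t) *\<^sub>R n1 z) = norm (t *\<^sub>R n2 z)" using e by (metis norm_minus_cancel)
  then have "1 - t = t" using t n1_props[OF z] n2_props[OF z] by simp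
  then have t2: "t = 1/2" by simp
  have "(1/2) *\<^sub>R (n1 z + n2 z) = 0" using e t2 by (simp add: scaleR_add_right eq_neg_iff_add_eq_0)
  then have "n1 z + n2 z = 0" by simp
  then have "n2 z = - n1 z" by (simp add: eq_neg_iff_add_eq_0 add.commute)
  then show False using nonanti[OF z] by simp
qed

lemma phi_cont: "continuous_on S (\<lambda>t. fh (yp z t))"
  unfolding yp_def using fh_cont
  by (intro continuous_on_compose2[OF fh_cont, of _ "\<lambda>t. (1 - t) *\<^sub>R n1 z + t *\<^sub>R n2 z" UNIV]) (auto intro!: continuous_intros)

definition "PT z T \<longleftrightarrow> 0 \<le> T \<and> T \<le> 1 \<and> fh (yp z T) = 0
   \<and> (T = 0 \<longrightarrow> (\<forall>e>0. \<exists>t. 0 < t \<and> t < e \<and> fh (yp z t) < 0))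
   \<and> (T = 1 \<longrightarrow> (\<forall>t. 0 \<le> t \<and> t < 1 \<longrightarrow> fh (yp z t) \<ge> 0))"

definition "tst z = (SOME T. PT z T)"

lemma tst: assumes z: "z \<in> ZZ" shows "PT z (tst z)"
proof -
  obtain T where "0 \<le> T" "T \<le> 1" "fh (yp z T) = 0"
    "T = 0 \<Longrightarrow> \<forall>e>0. \<exists>t. 0 < t \<and> t < e \<and> fh (yp z t) < 0"
    "T = 1 \<Longrightarrow> \<forall>t. 0 \<le> t \<and> t < 1 \<longrightarrow> fh (yp z t) \<ge> 0"
    using crossing_point[of "\<lambda>t. fh (yp z t)"] phi_cont fh_n1[OF z] fh_n2[OF z] by auto
  then have "PT z T" by (simp add: PT_def)
  then show ?thesis unfolding tst_def by (rule someI)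
qed

definition "pk z = yp z (tst z)"
definition "dir z = (1 / norm (pk z)) *\<^sub>R pk z"

lemma pk_nz: "z \<in> ZZ \<Longrightarrow> pk z \<noteq> 0"
  using yp_nz tst by (auto simp: pk_def PT_def)

lemma dir_unit: "z \<in> ZZ \<Longrightarrow> norm (dir z) = 1"
  using pk_nz by (simp add: dir_def)

lemma fh_dir: assumes "z \<in> ZZ" shows "fh (dir z) = 0"
proof -
  have "fh (dir z) = (1 / norm (pk z)) * fh (pk z)" unfolding dir_def by (rule fh_hom) simp
  then show ?thesis using tst[OF assms] by (simp add: PT_def pk_def)
qed

lemma dir_cases: assumes z: "z \<in> ZZ"
  shows "(tst z = 0 \<and> dir z = n1 z) \<or> (tst z = 1 \<and> dir z = n2 z) \<or> (0 < tst z \<and> tst z < 1)"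
proof -
  have t: "0 \<le> tst z" "tst z \<le> 1" using tst[OF z] by (auto simp: PT_def)
  have "tst z = 0 \<Longrightarrow> dir z = n1 z" using n1_props[OF z] by (simp add: dir_def pk_def)
  moreover have "tst z = 1 \<Longrightarrow> dir z = n2 z" using n2_props[OF z] by (simp add: dir_def pk_def)
  ultimately show ?thesis using t by force
qed

lemma dir_y: assumes z: "z \<in> ZZ" shows "pk z = norm (pk z) *\<^sub>R dir z"
  using pk_nz[OF z] by (simp add: dir_def)

lemma dir_eq_n1: assumes z: "z \<in> ZZ" and d: "dir z = n1 z" and ne: "n1 z \<noteq> n2 z" shows "tst z = 0"
proof (rule ccontr)
  assume t0: "tst z \<noteq> 0"
  define t where "t = tst z"
  have "pk z = norm (pk z) *\<^sub>R n1 z" using dir_y[OF z] d by simp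
  then have "(1 - t) *\<^sub>R n1 z + t *\<^sub>R n2 z = norm (pk z) *\<^sub>R n1 z" by (simp add: pk_def yp_def t_def)
  then have eq: "t *\<^sub>R n2 z = (norm (pk z) - (1 - t)) *\<^sub>R n1 z" by (simp add: algebra_simps)
  have "n2 z = (1/t) *\<^sub>R (t *\<^sub>R n2 z)" using t0 by (simp add: t_def)
  also have "\<dots> = (1/t) *\<^sub>R ((norm (pk z) - (1 - t)) *\<^sub>R n1 z)" by (simp only: eq)
  also have "\<dots> = ((norm (pk z) - (1 - t)) / t) *\<^sub>R n1 z" by simp
  finally have "n2 z = ((norm (pk z) - (1 - t)) / t) *\<^sub>R n1 z" .
  then have "n2 z = n1 z \<or> n2 z = - n1 z" using unit_mult n1_props[OF z] n2_props[OF z] by blast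
  then show False using ne nonanti[OF z] by auto
qed

lemma dir_eq_n2: assumes z: "z \<in> ZZ" and d: "dir z = n2 z" and ne: "n1 z \<noteq> n2 z" shows "tst z = 1"
proof (rule ccontr)
  assume t0: "tst z \<noteq> 1"
  define t where "t = tst z"
  have "pk z = norm (pk z) *\<^sub>R n2 z" using dir_y[OF z] d by simp
  then have "(1 - t) *\<^sub>R n1 z + t *\<^sub>R n2 z = norm (pk z) *\<^sub>R n2 z" by (simp add: pk_def yp_def t_def)
  then have eq: "(1 - t) *\<^sub>R n1 z = (norm (pk z) - t) *\<^sub>R n2 z" by (simp add: algebra_simps)
  have t1: "1 - t \<noteq> 0" using t0 by (simp add: t_def)
  have "n1 z = (1/(1 - t)) *\<^sub>R ((1 - t) *\<^sub>R n1 z)" using t1 by simp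
  also have "\<dots> = (1/(1 - t)) *\<^sub>R ((norm (pk z) - t) *\<^sub>R n2 z)" by (simp only: eq)
  also have "\<dots> = ((norm (pk z) - t) / (1 - t)) *\<^sub>R n2 z" by simp
  finally have "n1 z = ((norm (pk z) - t) / (1 - t)) *\<^sub>R n2 z" .
  then have "n1 z = n2 z \<or> n1 z = - n2 z" using unit_mult n1_props[OF z] n2_props[OF z] by blast
  then show False using ne nonanti[OF z] by auto
qed

lemma dir_mem: assumes z: "z \<in> ZZ" and v: "v \<noteq> 0" "inner v (n1 z) \<ge> 0" "inner v (n2 z) \<ge> 0" "inner v (dir z) = 0"
  shows "dir z = n1 z \<or> dir z = n2 z"
proof -
  consider "tst z = 0 \<and> dir z = n1 z" | "tst z = 1 \<and> dir z = n2 z" | "0 < tst z \<and> tst z < 1"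
    using dir_cases[OF z] by blast
  then show ?thesis
  proof cases
    case 3
    define t where "t = tst z"
    have "inner v (pk z) = 0" using dir_y[OF z] v(4) by (metis inner_scaleR_right mult_zero_right)
    then have e: "(1 - t) * inner v (n1 z) + t * inner v (n2 z) = 0"
      by (simp add: pk_def yp_def t_def inner_add_right)
    have "(1 - t) * inner v (n1 z) \<ge> 0" "t * inner v (n2 z) \<ge> 0" using 3 v by (simp_all add: t_def)
    then have "(1 - t) * inner v (n1 z) = 0" "t * inner v (n2 z) = 0" using e by linarith+
    then have "inner v (n1 z) = 0" "inner v (n2 z) = 0" using 3 by (auto simp: t_def)
    then have "n2 z = n1 z \<or> n2 z = - n1 z" using unit_perp2 n1_props[OF z] n2_props[OF z] v(1) by blast
    then have eq: "n2 z = n1 z" using nonanti[OF z] by auto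
    then have "pk z = n1 z" by (simp add: pk_def yp_def algebra_simps)
    then have "dir z = n1 z" using n1_props[OF z] by (simp add: dir_def)
    then show ?thesis by simp
  qed auto
qed

end


context twoc begin

lemma cross_label:
  assumes z: "z \<in> ZZ" and z': "z' \<in> ZZ" and ne: "z \<noteq> z'" and d: "d \<in> NN q1" "d \<in> NN q2"
    and e1: "inner (z - c1) d = 2" and e2: "inner (z' - c2) d = 2" and v: "inner (z - z') d = 0"
  shows False
proof -
  have a: "inner (z' - c1) d = 2"
  proof -
    have "inner (z - c1) d - inner (z' - c1) d = inner (z - z') d" by (simp add: inner_diff_left)
    then show ?thesis using e1 v by simp
  qed
  have b: "inner (z - c2) d = 2"
  proof -
    have "inner (z - c2) d - inner (z' - c2) d = inner (z - z') d" by (simp add: inner_diff_left)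
    then show ?thesis using e2 v by simp
  qed
  have L: "z \<in> LL q1 c1" "z \<in> LL q2 c2" "z' \<in> LL q1 c1" "z' \<in> LL q2 c2" using ZZ_LL z z' by auto
  have "closed_segment z z' \<subseteq> GG q1 c1" using seg_in_GG[OF L(1) L(3) d(1) e1 a] .
  moreover have "closed_segment z z' \<subseteq> GG q2 c2" using seg_in_GG[OF L(2) L(4) d(2) b e2] .
  ultimately have "closed_segment z z' \<subseteq> ZZ" unfolding ZZ_def by (rule Int_greatest)
  then have "infinite ZZ" by (rule seg_infinite[OF ne])
  then show False using fin by (simp add: ZZ_def)
qed

lemma supp1: assumes "z \<in> ZZ" "w \<in> ZZ" shows "inner (z - w) (n1 z) \<ge> 0"
  using support_ineq[of w q1 c1 "n1 z" z] ZZ_LL[OF assms(2)] n1_props[OF assms(1)] by simp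

lemma supp2: assumes "z \<in> ZZ" "w \<in> ZZ" shows "inner (z - w) (n2 z) \<ge> 0"
  using support_ineq[of w q2 c2 "n2 z" z] ZZ_LL[OF assms(2)] n2_props[OF assms(1)] by simp

lemma label1:
  assumes z: "z \<in> ZZ" and z': "z' \<in> ZZ" and ne: "z \<noteq> z'"
    and d1: "n1 z = d" "n1 z' = d" and d2: "n2 z \<noteq> d" "n2 z' \<noteq> d"
    and dd: "dir z = d" "dir z' = d" and v: "inner (z - z') d = 0"
  shows False
proof -
  have t0: "tst z = 0" "tst z' = 0" using dir_eq_n1[OF z] dir_eq_n1[OF z'] dd d1 d2 by auto
  have fd: "fh d = 0" using fh_dir[OF z] dd by simp
  have dn: "norm d = 1" "inner q1 d \<ge> 2" "d \<in> NN q1" using n1_props[OF z] d1 by auto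
  have "2 * norm d - inner q2 d \<le> 0" using fd unfolding fh_def by (metis max.cobounded2)
  then have "inner q2 d \<ge> 2" using dn by simp
  then have dN2: "d \<in> NN q2" using dn by (simp add: NN_def)
  have Dp: "inner Dl d > 0" using P2a[OF z] d1 d2 dN2 by auto
  have "min (inner Dl d) (inner q1 d - 2 * norm d) \<le> 0" using fd unfolding fh_def by (metis max.cobounded1)
  then have "inner q1 d - 2 \<le> 0" using Dp dn by (simp add: min_le_iff_disj)
  then have q1d: "inner q1 d = 2" using dn by simp
  define k where "k = inner q1 (rot d)"
  have k0: "k \<noteq> 0" and qk: "q1 - 2 *\<^sub>R d = k *\<^sub>R rot d" using k_nonzero[OF dn(1) q1d q1] by (auto simp: k_def)
  define v where "v = z - z'"
  have v0: "v \<noteq> 0" using ne by (simp add: v_def)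
  have sa: "inner v (n2 z) \<ge> 0" using supp2[OF z z'] by (simp add: v_def)
  have sb: "inner v (n2 z') \<le> 0" using supp2[OF z' z] by (simp add: v_def inner_diff_left)
  have na: "n2 z \<noteq> - d" using nonanti[OF z] d1 by simp
  have nb: "n2 z' \<noteq> - d" using nonanti[OF z'] d1 by simp
  have opp: "k * inner (rot d) (n2 z) > 0 \<or> k * inner (rot d) (n2 z') > 0"
    using opposite_sides[OF dn(1) _ _ v0 _ sa sb d2(1) na d2(2) nb k0] n2_props[OF z] n2_props[OF z'] v
    by (simp add: v_def)
  have contra: False if w: "w \<in> ZZ" "n1 w = d" "tst w = 0" "k * inner (rot d) (n2 w) > 0" for w
  proof -
    have B: "inner (q1 - 2 *\<^sub>R d) (n2 w) > 0" using w(4) qk by simp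
    obtain e1 where e1: "e1 > 0" "\<forall>s. 0 < s \<and> s < e1 \<longrightarrow> inner q1 ((1-s) *\<^sub>R d + s *\<^sub>R n2 w) > 2 * norm ((1-s) *\<^sub>R d + s *\<^sub>R n2 w)"
      using inside_lemma[OF dn(1) _ q1d B] n2_props[OF w(1)] by blast
    have "continuous (at 0) (\<lambda>s::real. inner Dl ((1-s) *\<^sub>R d + s *\<^sub>R n2 w))" by (intro continuous_intros)
    then obtain e2 where e2: "e2 > 0" "\<forall>s. \<bar>s\<bar> < e2 \<longrightarrow> inner Dl ((1-s) *\<^sub>R d + s *\<^sub>R n2 w) > 0"
      using cont_pos_nbhd[of "\<lambda>s::real. inner Dl ((1-s) *\<^sub>R d + s *\<^sub>R n2 w)"] Dp by auto
    obtain t where t: "0 < t" "t < min e1 e2" "fh (yp w t) < 0"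
      using tst[OF w(1)] w(3) e1(1) e2(1) unfolding PT_def by (metis min_less_iff_conj)
    have yw: "yp w t = (1-t) *\<^sub>R d + t *\<^sub>R n2 w" using w(2) by (simp add: yp_def)
    have "inner Dl (yp w t) > 0" using e2 t yw by simp
    moreover have "inner q1 (yp w t) - 2 * norm (yp w t) > 0" using e1 t yw by simp
    ultimately have "fh (yp w t) > 0" unfolding fh_def by (simp add: less_max_iff_disj)
    then show False using t(3) by simp
  qed
  show False using opp contra[OF z] contra[OF z'] d1 t0 by auto
qed

lemma label2:
  assumes z: "z \<in> ZZ" and z': "z' \<in> ZZ" and ne: "z \<noteq> z'"
    and d1: "n2 z = d" "n2 z' = d" and d2: "n1 z \<noteq> d" "n1 z' \<noteq> d"
    and dd: "dir z = d" "dir z' = d" and v: "inner (z - z') d = 0"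
  shows False
proof -
  have t1: "tst z = 1" "tst z' = 1" using dir_eq_n2[OF z] dir_eq_n2[OF z'] dd d1 d2 by auto
  have fd: "fh d = 0" using fh_dir[OF z] dd by simp
  have dn: "norm d = 1" "inner q2 d \<ge> 2" "d \<in> NN q2" using n2_props[OF z] d1 by auto
  have mneg: "min (inner Dl d) (inner q1 d - 2 * norm d) < 0"
  proof (cases "d \<in> NN q1")
    case True
    then have "inner Dl d < 0" using P2b[OF z] d1 d2 by auto
    then show ?thesis by simp
  next
    case False
    then have "inner q1 d < 2" using dn by (auto simp: NN_def)
    then show ?thesis using dn by simp
  qed
  have "2 * norm d - inner q2 d = 0" using fd mneg unfolding fh_def by (metis max_def order_less_irrefl)
  then have q2d: "inner q2 d = 2" using dn by simp
  define k where "k = inner q2 (rot d)"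
  have k0: "k \<noteq> 0" and qk: "q2 - 2 *\<^sub>R d = k *\<^sub>R rot d" using k_nonzero[OF dn(1) q2d q2] by (auto simp: k_def)
  define v where "v = z - z'"
  have v0: "v \<noteq> 0" using ne by (simp add: v_def)
  have sa: "inner v (n1 z) \<ge> 0" using supp1[OF z z'] by (simp add: v_def)
  have sb: "inner v (n1 z') \<le> 0" using supp1[OF z' z] by (simp add: v_def inner_diff_left)
  have na: "n1 z \<noteq> - d" using nonanti[OF z] d1 by auto
  have nb: "n1 z' \<noteq> - d" using nonanti[OF z'] d1 by auto
  have opp: "k * inner (rot d) (n1 z) > 0 \<or> k * inner (rot d) (n1 z') > 0"
    using opposite_sides[OF dn(1) _ _ v0 _ sa sb d2(1) na d2(2) nb k0] n1_props[OF z] n1_props[OF z'] v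
    by (simp add: v_def)
  have contra: False if w: "w \<in> ZZ" "n2 w = d" "tst w = 1" "k * inner (rot d) (n1 w) > 0" for w
  proof -
    have B: "inner (q2 - 2 *\<^sub>R d) (n1 w) > 0" using w(4) qk by simp
    obtain e1 where e1: "e1 > 0" "\<forall>s. 0 < s \<and> s < e1 \<longrightarrow> inner q2 ((1-s) *\<^sub>R d + s *\<^sub>R n1 w) > 2 * norm ((1-s) *\<^sub>R d + s *\<^sub>R n1 w)"
      using inside_lemma[OF dn(1) _ q2d B] n1_props[OF w(1)] by blast
    have "\<exists>e2>0. \<forall>s. \<bar>s\<bar> < e2 \<longrightarrow> min (inner Dl ((1-s) *\<^sub>R d + s *\<^sub>R n1 w)) (inner q1 ((1-s) *\<^sub>R d + s *\<^sub>R n1 w) - 2 * norm ((1-s) *\<^sub>R d + s *\<^sub>R n1 w)) < 0"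
    proof (cases "inner Dl d < 0")
      case True
      have "continuous (at 0) (\<lambda>s::real. - inner Dl ((1-s) *\<^sub>R d + s *\<^sub>R n1 w))" by (intro continuous_intros)
      then obtain e2 where e2: "e2 > 0" "\<forall>s. \<bar>s\<bar> < e2 \<longrightarrow> - inner Dl ((1-s) *\<^sub>R d + s *\<^sub>R n1 w) > 0"
        using cont_pos_nbhd[of "\<lambda>s::real. - inner Dl ((1-s) *\<^sub>R d + s *\<^sub>R n1 w)"] True by auto
      then show ?thesis by (metis min_less_iff_disj neg_0_less_iff_less)
    next
      case False
      then have "inner q1 d - 2 < 0" using mneg dn by (simp add: min_less_iff_disj)
      have "continuous (at 0) (\<lambda>s::real. 2 * norm ((1-s) *\<^sub>R d + s *\<^sub>R n1 w) - inner q1 ((1-s) *\<^sub>R d + s *\<^sub>R n1 w))"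
        by (intro continuous_intros)
      then obtain e2 where e2: "e2 > 0" "\<forall>s. \<bar>s\<bar> < e2 \<longrightarrow> 2 * norm ((1-s) *\<^sub>R d + s *\<^sub>R n1 w) - inner q1 ((1-s) *\<^sub>R d + s *\<^sub>R n1 w) > 0"
        using cont_pos_nbhd[of "\<lambda>s::real. 2 * norm ((1-s) *\<^sub>R d + s *\<^sub>R n1 w) - inner q1 ((1-s) *\<^sub>R d + s *\<^sub>R n1 w)"]
          \<open>inner q1 d - 2 < 0\<close> dn by auto
      then show ?thesis by (metis diff_gt_0_iff_gt min_less_iff_disj diff_less_0_iff_less)
    qed
    then obtain e2 where e2: "e2 > 0" "\<forall>s. \<bar>s\<bar> < e2 \<longrightarrow> min (inner Dl ((1-s) *\<^sub>R d + s *\<^sub>R n1 w)) (inner q1 ((1-s) *\<^sub>R d + s *\<^sub>R n1 w) - 2 * norm ((1-s) *\<^sub>R d + s *\<^sub>R n1 w)) < 0"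
      by blast
    define s where "s = min (min e1 e2) 1 / 2"
    have s: "0 < s" "s < e1" "\<bar>s\<bar> < e2" "s < 1" using e1(1) e2(1) by (auto simp: s_def)
    have ge: "fh (yp w (1 - s)) \<ge> 0" using tst[OF w(1)] w(3) s unfolding PT_def by auto
    have yw: "yp w (1 - s) = (1-s) *\<^sub>R d + s *\<^sub>R n1 w" using w(2) by (simp add: yp_def algebra_simps)
    have "fh (yp w (1 - s)) < 0" unfolding fh_def yw using e1(2) e2(2) s by (simp add: max_less_iff_conj)
    then show False using ge by simp
  qed
  show False using opp contra[OF z] contra[OF z'] d1 t1 by auto
qed

lemma dir_inj: "inj_on dir ZZ"
proof (rule inj_onI, rule ccontr)
  fix z z' assume z: "z \<in> ZZ" and z': "z' \<in> ZZ" and eq: "dir z = dir z'" and ne: "z \<noteq> z'"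
  define d where "d = dir z"
  define v where "v = z - z'"
  have v0: "v \<noteq> 0" using ne by (simp add: v_def)
  have s1: "inner v (n1 z) \<ge> 0" "inner v (n2 z) \<ge> 0" using supp1[OF z z'] supp2[OF z z'] by (simp_all add: v_def)
  have s2: "inner (- v) (n1 z') \<ge> 0" "inner (- v) (n2 z') \<ge> 0" using supp1[OF z' z] supp2[OF z' z] by (simp_all add: v_def)
  have tz: "0 \<le> tst z" "tst z \<le> 1" using tst[OF z] by (auto simp: PT_def)
  have tz': "0 \<le> tst z'" "tst z' \<le> 1" using tst[OF z'] by (auto simp: PT_def)
  have pz: "inner v (pk z) \<ge> 0"
  proof -
    have "inner v (pk z) = (1 - tst z) * inner v (n1 z) + tst z * inner v (n2 z)"
      by (simp add: pk_def yp_def inner_add_right)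
    then show ?thesis using s1 tz by simp
  qed
  have pz': "inner (- v) (pk z') \<ge> 0"
  proof -
    have "inner (- v) (pk z') = (1 - tst z') * inner (- v) (n1 z') + tst z' * inner (- v) (n2 z')"
      by (simp add: pk_def yp_def inner_add_right)
    then show ?thesis using s2 tz' by (simp only:) (intro add_nonneg_nonneg mult_nonneg_nonneg; simp)
  qed
  have "inner v d \<ge> 0" using pz pk_nz[OF z] by (simp add: d_def dir_def)
  moreover have "inner (- v) d \<ge> 0"
  proof -
    have "inner (- v) (dir z') = (1 / norm (pk z')) * inner (- v) (pk z')" unfolding dir_def by (rule inner_scaleR_right)
    moreover have "(1 / norm (pk z')) * inner (- v) (pk z') \<ge> 0" using pz' by (intro mult_nonneg_nonneg) auto
    ultimately have "inner (- v) (dir z') \<ge> 0" by linarith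
    then show ?thesis using eq by (simp add: d_def)
  qed
  ultimately have vd: "inner v d = 0" by simp
  have m1: "d = n1 z \<or> d = n2 z" using dir_mem[OF z v0 s1 vd[unfolded d_def]] by (simp add: d_def)
  have vd': "inner (- v) (dir z') = 0" using vd eq by (simp add: d_def)
  have m2: "d = n1 z' \<or> d = n2 z'" using dir_mem[OF z' _ s2 vd'] v0 eq by (simp add: d_def)
  have vdz: "inner (z - z') d = 0" using vd by (simp add: v_def)
  have vdz': "inner (z' - z) d = 0" using vd by (simp add: v_def inner_diff_left)
  have c12: False if "d = n1 z" "d = n2 z'"
    using cross_label[OF z z' ne _ _ _ _ vdz] n1_props[OF z] n2_props[OF z'] that by auto
  have c21: False if "d = n2 z" "d = n1 z'"
    using cross_label[OF z' z ne[symmetric] _ _ _ _ vdz'] n1_props[OF z'] n2_props[OF z] that by auto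
  have dd: "dir z = d" "dir z' = d" using eq by (simp_all add: d_def)
  show False
  proof (cases "d = n1 z")
    case True
    then have a: "d = n1 z'" "d \<noteq> n2 z'" using m2 c12 by auto
    have "d \<noteq> n2 z" using True c21 a by auto
    then show False using label1[OF z z' ne True[symmetric] a(1)[symmetric] _ _ dd vdz] a by auto
  next
    case False
    then have b: "d = n2 z" using m1 by simp
    then have a: "d = n2 z'" "d \<noteq> n1 z'" using m2 c21 by auto
    show False using label2[OF z z' ne b[symmetric] a(1)[symmetric] _ _ dd vdz] a False by auto
  qed
qed

end


context twoc begin

definition "E2 = {d. norm d = 1 \<and> inner q2 d = 2}"
definition "E1 = {d. norm d = 1 \<and> inner q1 d = 2}"
definition "AA = {d. norm d = 1 \<and> inner Dl d = 0 \<and> inner q1 d \<ge> 2 \<and> inner q2 d \<ge> 2}"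
definition "BB = {d. norm d = 1 \<and> inner q1 d = 2 \<and> inner Dl d \<ge> 0 \<and> inner q2 d \<ge> 2}"
definition "D0 = {d. norm d = 1 \<and> fh d = 0}"

lemma q_nz: "q1 \<noteq> 0" "q2 \<noteq> 0"
proof -
  show "q1 \<noteq> 0" proof assume "q1 = 0" then show False using q1 by simp qed
  show "q2 \<noteq> 0" proof assume "q2 = 0" then show False using q2 by simp qed
qed

lemma E_fin: "finite E1 \<and> card E1 \<le> 2" "finite E2 \<and> card E2 \<le> 2"
  using circle_line[OF q_nz(1), of 2] circle_line[OF q_nz(2), of 2] by (simp_all add: E1_def E2_def)

lemma D0_sub: "D0 \<subseteq> E2 \<union> (AA \<union> BB)"
proof
  fix d assume "d \<in> D0"
  then have d1: "norm d = 1" and f: "fh d = 0" by (auto simp: D0_def)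
  define a where "a = min (inner Dl d) (inner q1 d - 2)"
  define b where "b = 2 - inner q2 d"
  have m: "max a b = 0" using f d1 by (simp add: fh_def a_def b_def)
  show "d \<in> E2 \<union> (AA \<union> BB)"
  proof (cases "b = 0")
    case True then show ?thesis using d1 by (simp add: E2_def b_def)
  next
    case False
    then have "b < 0" "a = 0" using m by (auto simp: max_def split: if_splits)
    then have q2d: "inner q2 d \<ge> 2" by (simp add: b_def)
    have "(inner Dl d = 0 \<and> inner q1 d \<ge> 2) \<or> (inner q1 d = 2 \<and> inner Dl d \<ge> 0)"
      using \<open>a = 0\<close> by (auto simp: a_def min_def split: if_splits)
    then show ?thesis using d1 q2d by (auto simp: AA_def BB_def)
  qed
qed

lemma O_in_ZZ: assumes "Dl = 0" "d \<in> NN q1" "d \<in> NN q2" shows "c1 + 2 *\<^sub>R d \<in> ZZ"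
proof -
  have c: "c2 = c1" using assms(1) by (simp add: Dl_def)
  have d1: "norm d = 1" using assms(2) by (simp add: NN_def)
  have dd: "inner d d = 1" using d1 by (simp add: power2_norm_eq_inner[symmetric])
  have inL: "c1 + 2 *\<^sub>R d \<in> LL q c1" for q
  proof -
    have "inner (2 *\<^sub>R d) m \<le> 2" if "m \<in> NN q" for m
    proof -
      have "inner d m \<le> norm d * norm m" by (rule norm_cauchy_schwarz)
      then show ?thesis using that d1 by (auto simp: NN_def)
    qed
    then show ?thesis by (auto simp: LL_def)
  qed
  have "inner (c1 + 2 *\<^sub>R d - c1) d = 2" using dd by simp
  then have g1: "c1 + 2 *\<^sub>R d \<in> GG q1 c1" and g2: "c1 + 2 *\<^sub>R d \<in> GG q2 c1"
    using inL assms(2,3) by (auto simp: GG_def)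
  have "GG q2 c2 = GG q2 c1" using c by simp
  then show ?thesis unfolding ZZ_def using g1 g2 by simp
qed

lemma AB_card: "finite (AA \<union> BB) \<and> card (AA \<union> BB) \<le> 2"
proof (cases "Dl = 0")
  case True
  have BA: "BB \<subseteq> AA" using True by (auto simp: AA_def BB_def)
  have single: "\<forall>a\<in>AA. \<forall>b\<in>AA. a = b"
  proof (intro ballI, rule ccontr)
    fix a b assume ab: "a \<in> AA" "b \<in> AA" "a \<noteq> b"
    have N: "a \<in> NN q1" "a \<in> NN q2" "b \<in> NN q1" "b \<in> NN q2" using ab by (auto simp: AA_def NN_def)
    have inf: "infinite (NN q1 \<inter> NN q2)" using arc_infinite[OF N ab(3)] .
    define h where "h d = c1 + 2 *\<^sub>R d" for d :: "real^2"
    have "inj_on h (NN q1 \<inter> NN q2)" by (rule inj_onI) (simp add: h_def)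
    moreover have "h ` (NN q1 \<inter> NN q2) \<subseteq> ZZ" using O_in_ZZ[OF True] by (auto simp: h_def)
    ultimately have "infinite ZZ" using inf by (meson finite_imageD finite_subset)
    then show False using fin by (simp add: ZZ_def)
  qed
  have "AA \<union> BB = AA" using BA by auto
  moreover have "finite AA \<and> card AA \<le> 1"
  proof (cases "AA = {}")
    case True then show ?thesis by simp
  next
    case False
    then obtain a where "a \<in> AA" by auto
    then have "AA = {a}" using single by auto
    then show ?thesis by simp
  qed
  ultimately show ?thesis by simp
next
  case False
  have singleA: "\<forall>a\<in>AA. \<forall>b\<in>AA. a = b"
  proof (intro ballI)
    fix a b assume ab: "a \<in> AA" "b \<in> AA"
    have "b = a \<or> b = - a" using unit_perp2[OF _ _ False] ab by (auto simp: AA_def)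
    moreover have "b \<noteq> - a" using NN_not_antipodal[of a q1 b] ab by (auto simp: AA_def NN_def)
    ultimately show "a = b" by simp
  qed
  have finA: "finite AA \<and> card AA \<le> 1"
  proof (cases "AA = {}")
    case True then show ?thesis by simp
  next
    case False
    then obtain a where "a \<in> AA" by auto
    then have "AA = {a}" using singleA by auto
    then show ?thesis by simp
  qed
  have BE: "BB \<subseteq> E1" by (auto simp: BB_def E1_def)
  have finB: "finite BB" "card BB \<le> 2" using E_fin(1) BE by (auto intro: finite_subset card_mono order_trans)
  show ?thesis
  proof (cases "AA \<subseteq> BB")
    case True
    then have "AA \<union> BB = BB" by auto
    then show ?thesis using finB by simp
  next
    case False
    then obtain \<zeta> where z: "\<zeta> \<in> AA" "\<zeta> \<notin> BB" by auto
    have singleB: "\<forall>a\<in>BB. \<forall>b\<in>BB. a = b"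
    proof (intro ballI, rule ccontr)
      fix a b assume ab: "a \<in> BB" "b \<in> BB" "a \<noteq> b"
      have za: "norm \<zeta> = 1" "inner q1 \<zeta> \<ge> 2" "inner Dl \<zeta> = 0" using z by (auto simp: AA_def)
      have aa: "norm a = 1" "inner q1 a = 2" "inner Dl a \<ge> 0" "inner q2 a \<ge> 2" using ab by (auto simp: BB_def)
      have bb: "norm b = 1" "inner q1 b = 2" "inner Dl b \<ge> 0" using ab by (auto simp: BB_def)
      obtain \<alpha> \<beta> where ab2: "\<alpha> \<ge> 0" "\<beta> \<ge> 0" "\<zeta> = \<alpha> *\<^sub>R a + \<beta> *\<^sub>R b"
        using cone_lemma[OF q1 aa(1,2) bb(1,2) ab(3) za(1,2)] by blast
      have "\<alpha> * inner Dl a + \<beta> * inner Dl b = 0" using za(3) ab2(3) by (simp add: inner_add_right)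
      moreover have "\<alpha> * inner Dl a \<ge> 0" "\<beta> * inner Dl b \<ge> 0" using ab2 aa bb by simp_all
      ultimately have e: "\<alpha> * inner Dl a = 0" by linarith
      show False
      proof (cases "\<alpha> = 0")
        case True
        then have "\<zeta> = \<beta> *\<^sub>R b" using ab2 by simp
        then have "\<bar>\<beta>\<bar> = 1" using za(1) bb(1) by simp
        then have "\<zeta> = b" using ab2 \<open>\<zeta> = \<beta> *\<^sub>R b\<close> by simp
        then show False using z ab by simp
      next
        case False
        then have "inner Dl a = 0" using e by simp
        then have "a \<in> AA" using aa by (simp add: AA_def)
        then have "a = \<zeta>" using singleA z by auto
        then show False using z ab by simp
      qed
    qed
    have "card BB \<le> 1"
      using singleB finB card_le_Suc0_iff_eq by (metis One_nat_def)
    moreover have "card (AA \<union> BB) \<le> card AA + card BB" by (rule card_Un_le)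
    ultimately have "card (AA \<union> BB) \<le> 2" using finA by linarith
    then show ?thesis using finA finB by simp
  qed
qed

lemma D0_card: "finite D0 \<and> card D0 \<le> 4"
proof -
  have f: "finite (E2 \<union> (AA \<union> BB))" using E_fin AB_card by simp
  have "card (E2 \<union> (AA \<union> BB)) \<le> card E2 + card (AA \<union> BB)" by (rule card_Un_le)
  also have "\<dots> \<le> 4" using E_fin AB_card by simp
  finally show ?thesis using f D0_sub by (meson card_mono finite_subset order_trans)
qed

theorem card_ZZ: "card ZZ \<le> 4"
proof -
  have "dir ` ZZ \<subseteq> D0" using dir_unit fh_dir by (auto simp: D0_def)
  then have "card (dir ` ZZ) \<le> card D0" using D0_card by (simp add: card_mono)
  moreover have "card (dir ` ZZ) = card ZZ" using dir_inj by (rule card_image)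
  ultimately show ?thesis using D0_card by simp
qed

end

theorem core_count:
  fixes q1 q2 c1 c2 :: "real^2"
  assumes "norm q1 \<ge> 2" "norm q2 \<ge> 2" "finite (GG q1 c1 \<inter> GG q2 c2)"
  shows "card (GG q1 c1 \<inter> GG q2 c2) \<le> 4"
proof -
  consider "norm q1 = 2" | "norm q2 = 2" | "norm q1 > 2" "norm q2 > 2" using assms by linarith
  then show ?thesis
  proof cases
    case 1 then show ?thesis using line_case[OF 1 assms(3)] by simp
  next
    case 2
    have "finite (GG q2 c2 \<inter> GG q1 c1)" using assms(3) by (simp add: Int_commute)
    then have "card (GG q2 c2 \<inter> GG q1 c1) \<le> 2" using line_case[OF 2] by simp
    then show ?thesis by (simp add: Int_commute)
  next
    case 3
    show ?thesis
    proof (cases "\<exists>z n. z \<in> GG q1 c1 \<inter> GG q2 c2 \<and> n \<in> NN q1 \<and> inner (z - c1) n = 2 \<and> - n \<in> NN q2 \<and> inner (z - c2) (- n) = 2")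
      case True
      then obtain z n where "z \<in> GG q1 c1 \<inter> GG q2 c2" "n \<in> NN q1" "inner (z - c1) n = 2" "- n \<in> NN q2" "inner (z - c2) (- n) = 2"
        by blast
      then show ?thesis using antipodal_case[OF assms(3)] by fastforce
    next
      case False
      interpret twoc q1 q2 c1 c2
        using 3 assms(3) False by unfold_locales blast+
      show ?thesis using card_ZZ by (simp add: ZZ_def)
    qed
  qed
qed


lemma seg_point:
  assumes "z \<in> closed_segment x y"
  obtains t where "0 \<le> t" "t \<le> 1" "z = (1 - t) *\<^sub>R x + t *\<^sub>R y"
  using assms by (auto simp: closed_segment_def)

lemma hull_balls_iff:
  fixes a x y :: "real^2"
  shows "ball a 1 \<inter> convex hull (ball x 1 \<union> ball y 1) \<noteq> {} \<longleftrightarrow> (\<exists>z\<in>closed_segment x y. dist a z < 2)"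
proof
  define R where "R = {u. \<exists>z\<in>closed_segment x y. dist u z < 1}"
  have cR: "convex R"
    unfolding convex_def R_def
  proof (clarify)
    fix u1 u2 z1 z2 and s1 s2 :: real
    assume z1: "z1 \<in> closed_segment x y" "dist u1 z1 < 1" and z2: "z2 \<in> closed_segment x y" "dist u2 z2 < 1"
      and s: "0 \<le> s1" "0 \<le> s2" "s1 + s2 = 1"
    have zz: "s1 *\<^sub>R z1 + s2 *\<^sub>R z2 \<in> closed_segment x y"
      using convex_closed_segment[of x y] z1(1) z2(1) s unfolding convex_def by blast
    have "dist (s1 *\<^sub>R u1 + s2 *\<^sub>R u2) (s1 *\<^sub>R z1 + s2 *\<^sub>R z2) = norm (s1 *\<^sub>R (u1 - z1) + s2 *\<^sub>R (u2 - z2))"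
      by (simp add: dist_norm algebra_simps)
    also have "\<dots> \<le> s1 * norm (u1 - z1) + s2 * norm (u2 - z2)"
      using s by (metis (no_types, lifting) abs_of_nonneg norm_scaleR norm_triangle_ineq)
    also have "\<dots> < s1 * 1 + s2 * 1"
    proof (cases "s1 = 0")
      case True then show ?thesis using s z2 by (simp add: dist_norm)
    next
      case False
      then have "s1 * norm (u1 - z1) < s1 * 1" using s z1 by (simp add: dist_norm)
      moreover have "s2 * norm (u2 - z2) \<le> s2 * 1" using s z2 by (intro mult_left_mono) (auto simp: dist_norm)
      ultimately show ?thesis by linarith
    qed
    finally show "\<exists>z\<in>closed_segment x y. dist (s1 *\<^sub>R u1 + s2 *\<^sub>R u2) z < 1" using zz s by auto
  qed
  have bR: "ball x 1 \<union> ball y 1 \<subseteq> R"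
    unfolding R_def by (auto simp: dist_commute intro: bexI[of _ x] bexI[of _ y])
  have hR: "convex hull (ball x 1 \<union> ball y 1) \<subseteq> R" using hull_minimal[OF bR] cR by blast
  assume "ball a 1 \<inter> convex hull (ball x 1 \<union> ball y 1) \<noteq> {}"
  then obtain u where u0: "u \<in> ball a 1" "u \<in> convex hull (ball x 1 \<union> ball y 1)" by blast
  then have u: "dist a u < 1" "u \<in> R" using hR by auto
  then obtain z where z: "z \<in> closed_segment x y" "dist u z < 1" by (auto simp: R_def)
  have "dist a z \<le> dist a u + dist u z" by (rule dist_triangle)
  then show "\<exists>z\<in>closed_segment x y. dist a z < 2" using u z by (intro bexI[of _ z]) auto
next
  assume "\<exists>z\<in>closed_segment x y. dist a z < 2"
  then obtain z where z: "z \<in> closed_segment x y" "dist a z < 2" by blast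
  obtain t where t: "0 \<le> t" "t \<le> 1" "z = (1 - t) *\<^sub>R x + t *\<^sub>R y" using seg_point[OF z(1)] by blast
  define u where "u = (1/2) *\<^sub>R (a + z)"
  define e where "e = u - z"
  have "e = (1/2) *\<^sub>R (a - z)" by (simp add: e_def u_def vec2_eq algebra_simps)
  then have ne: "norm e < 1" using z(2) by (simp add: dist_norm)
  have au: "dist a u < 1"
  proof -
    have "a - u = (1/2) *\<^sub>R (a - z)" by (simp add: u_def vec2_eq algebra_simps)
    then show ?thesis using z(2) by (simp add: dist_norm)
  qed
  have xe: "x + e \<in> convex hull (ball x 1 \<union> ball y 1)" using ne by (intro hull_inc) (simp add: dist_norm)
  have ye: "y + e \<in> convex hull (ball x 1 \<union> ball y 1)" using ne by (intro hull_inc) (simp add: dist_norm)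
  have "(1 - t) *\<^sub>R (x + e) + t *\<^sub>R (y + e) \<in> convex hull (ball x 1 \<union> ball y 1)"
    by (rule convexD[OF convex_convex_hull xe ye]) (use t in auto)
  moreover have "(1 - t) *\<^sub>R (x + e) + t *\<^sub>R (y + e) = u" using t(3) by (simp add: e_def vec2_eq algebra_simps)
  ultimately show "ball a 1 \<inter> convex hull (ball x 1 \<union> ball y 1) \<noteq> {}" using au by auto
qed

definition UU :: "real^2 \<Rightarrow> real^2 \<Rightarrow> (real^2) set" where
  "UU q c = {w. \<forall>m\<in>NN q. inner (w - c) m < 2}"

lemma Sh_eq:
  fixes p c :: "real^2"
  assumes pc: "norm (p - c) \<ge> 2"
  shows "{w. \<exists>z\<in>closed_segment p w. dist c z < 2} = UU (p - c) c"
proof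
  show "{w. \<exists>z\<in>closed_segment p w. dist c z < 2} \<subseteq> UU (p - c) c"
  proof (clarify)
    fix w z assume z: "z \<in> closed_segment p w" "dist c z < 2"
    obtain t where t: "0 \<le> t" "t \<le> 1" "z = (1 - t) *\<^sub>R p + t *\<^sub>R w" using seg_point[OF z(1)] by blast
    show "w \<in> UU (p - c) c" unfolding UU_def
    proof (intro CollectI ballI)
      fix m assume m: "m \<in> NN (p - c)"
      have m1: "norm m = 1" and pm: "inner (p - c) m \<ge> 2" using m by (auto simp: NN_def)
      have "inner (z - c) m \<le> norm (z - c) * norm m" by (rule norm_cauchy_schwarz)
      then have zm: "inner (z - c) m < 2" using z(2) m1 by (simp add: dist_norm norm_minus_commute)
      have "z - c = (1 - t) *\<^sub>R (p - c) + t *\<^sub>R (w - c)" using t(3) by (simp add: algebra_simps)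
      then have e: "inner (z - c) m = (1 - t) * inner (p - c) m + t * inner (w - c) m" by (simp add: inner_add_left)
      have t0: "t \<noteq> 0"
      proof
        assume "t = 0"
        then have "z = p" using t(3) by simp
        then show False using z(2) pc by (simp add: dist_norm norm_minus_commute)
      qed
      have "(1 - t) * inner (p - c) m \<ge> (1 - t) * 2" using t pm by (intro mult_left_mono) auto
      moreover have "t * inner (w - c) m = inner (z - c) m - (1 - t) * inner (p - c) m" using e by simp
      ultimately have "t * inner (w - c) m < 2 - (1 - t) * 2" using zm by linarith
      then have "t * inner (w - c) m < t * 2" by (simp add: algebra_simps)
      then show "inner (w - c) m < 2" using t t0 by simp
    qed
  qed
  show "UU (p - c) c \<subseteq> {w. \<exists>z\<in>closed_segment p w. dist c z < 2}"
  proof (rule subsetI, rule ccontr)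
    fix w assume w: "w \<in> UU (p - c) c" and nw: "w \<notin> {w. \<exists>z\<in>closed_segment p w. dist c z < 2}"
    then have far: "\<forall>z\<in>closed_segment p w. dist c z \<ge> 2" by (auto simp: not_less)
    obtain z0 where z0: "z0 \<in> closed_segment p w" "\<And>y. y \<in> closed_segment p w \<Longrightarrow> dist c z0 \<le> dist c y"
      using distance_attains_inf[of "closed_segment p w" c] by auto
    have "dist c z0 \<ge> 2" using far z0(1) by blast
    moreover have "dist c z0 = norm (z0 - c)" by (simp add: dist_norm norm_minus_commute)
    ultimately have r: "norm (z0 - c) \<ge> 2" by simp
    then have r0: "norm (z0 - c) > 0" by linarith
    define m where "m = (1 / norm (z0 - c)) *\<^sub>R (z0 - c)"
    have m1: "norm m = 1" using r0 by (simp add: m_def)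
    have big: "inner (y - c) m \<ge> 2" if y: "y \<in> closed_segment p w" for y
    proof -
      have "inner (c - z0) (y - z0) \<le> 0"
        using any_closest_point_dot[of "closed_segment p w" z0 y c] z0 y by auto
      then have "inner (y - z0) (z0 - c) \<ge> 0" by (simp add: inner_commute inner_diff_left inner_diff_right)
      moreover have "inner (y - c) (z0 - c) = inner (y - z0) (z0 - c) + inner (z0 - c) (z0 - c)"
        by (simp add: inner_diff_left)
      ultimately have "inner (y - c) (z0 - c) \<ge> (norm (z0 - c))^2" by (simp add: power2_norm_eq_inner)
      then have "inner (y - c) m \<ge> (norm (z0 - c))^2 / norm (z0 - c)"
        using r0 by (simp add: m_def divide_right_mono)
      also have "(norm (z0 - c))^2 / norm (z0 - c) = norm (z0 - c)" using r0 by (simp add: power2_eq_square)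
      finally show ?thesis using r by linarith
    qed
    have "inner (p - c) m \<ge> 2" using big[of p] by simp
    then have "m \<in> NN (p - c)" using m1 by (simp add: NN_def)
    then have "inner (w - c) m < 2" using w by (auto simp: UU_def)
    moreover have "inner (w - c) m \<ge> 2" using big[of w] by simp
    ultimately show False by simp
  qed
qed

lemma open_Sh: assumes "norm (p - c) \<ge> 2" shows "open {w. \<exists>z\<in>closed_segment p w. dist c z < (2::real)}"
  unfolding open_dist
proof (clarify)
  fix w z assume z: "z \<in> closed_segment p w" "dist c z < 2"
  obtain t where t: "0 \<le> t" "t \<le> 1" "z = (1 - t) *\<^sub>R p + t *\<^sub>R w" using seg_point[OF z(1)] by blast
  define e where "e = 2 - dist c z"
  have e0: "e > 0" using z(2) by (simp add: e_def)
  show "\<exists>e>0. \<forall>y. dist y w < e \<longrightarrow> y \<in> {w. \<exists>z\<in>closed_segment p w. dist c z < 2}"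
  proof (intro exI[of _ e] conjI allI impI e0)
    fix y assume y: "dist y w < e"
    define z' where "z' = (1 - t) *\<^sub>R p + t *\<^sub>R y"
    have "z' \<in> closed_segment p y" using t by (auto simp: z'_def closed_segment_def)
    moreover have "dist z' z = t * dist y w" using t(1) t(3) by (simp add: z'_def dist_norm algebra_simps flip: scaleR_diff_right)
    then have "dist z' z \<le> dist y w" using t by (simp add: mult_left_le_one_le)
    then have "dist c z' < 2" using y z(2) dist_triangle[of c z' z] by (simp add: e_def dist_commute)
    ultimately show "y \<in> {w. \<exists>z\<in>closed_segment p w. dist c z < 2}" by blast
  qed
qed

lemma frontier_UU:
  fixes q c :: "real^2"
  assumes q: "norm q \<ge> 2"
  shows "frontier (UU q c) = GG q c"
proof -
  have Ueq: "UU q c = {w. \<exists>z\<in>closed_segment (c + q) w. dist c z < 2}"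
    using Sh_eq[of "c + q" c] q by simp
  have op: "open (UU q c)" unfolding Ueq using open_Sh[of "c + q" c] q by simp
  have clL: "closed (LL q c)"
  proof -
    have "LL q c = (\<Inter>m\<in>NN q. {w. inner (w - c) m \<le> 2})" by (auto simp: LL_def)
    moreover have "closed {w. inner (w - c) m \<le> 2}" for m
      by (intro closed_Collect_le continuous_intros)
    ultimately show ?thesis by auto
  qed
  have UL: "UU q c \<subseteq> LL q c" by (auto simp: UU_def LL_def less_imp_le)
  have cl: "closure (UU q c) \<subseteq> LL q c" using closure_minimal[OF UL clL] .
  have fr: "frontier (UU q c) = closure (UU q c) - UU q c"
    using op by (simp add: frontier_def interior_open)
  show ?thesis
  proof
    show "frontier (UU q c) \<subseteq> GG q c"
    proof
      fix w assume "w \<in> frontier (UU q c)"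
      then have w1: "w \<in> LL q c" and w2: "w \<notin> UU q c" using fr cl by auto
      then obtain m where m: "m \<in> NN q" "inner (w - c) m \<ge> 2" by (auto simp: UU_def not_less)
      then have "inner (w - c) m = 2" using w1 by (auto simp: LL_def intro: order_antisym)
      then show "w \<in> GG q c" using w1 m by (auto simp: GG_def)
    qed
    show "GG q c \<subseteq> frontier (UU q c)"
    proof
      fix w assume w: "w \<in> GG q c"
      then have wL: "w \<in> LL q c" and wm: "\<exists>m\<in>NN q. inner (w - c) m = 2" by (auto simp: GG_def)
      obtain m0 where m0: "m0 \<in> NN q" "inner (w - c) m0 = 2" using wm by blast
      have nU: "w \<notin> UU q c"
      proof
        assume "w \<in> UU q c"
        then have "inner (w - c) m0 < 2" using m0(1) by (simp add: UU_def)
        then show False using m0(2) by simp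
      qed
      have "w \<in> closure (UU q c)"
        unfolding closure_approachable
      proof (intro allI impI)
        fix e :: real assume e: "e > 0"
        define \<delta> where "\<delta> = min 1 (e / (norm (w - c) + 1))"
        have np: "norm (w - c) + 1 > 0" using norm_ge_zero[of "w - c"] by linarith
        have d0: "\<delta> > 0" "\<delta> \<le> 1" using e np by (auto simp: \<delta>_def)
        define y where "y = c + (1 - \<delta>) *\<^sub>R (w - c)"
        have yU: "y \<in> UU q c"
          unfolding UU_def
        proof (intro CollectI ballI)
          fix m assume m: "m \<in> NN q"
          have x2: "inner (w - c) m \<le> 2" using wL m by (auto simp: LL_def)
          have "inner (y - c) m = (1 - \<delta>) * inner (w - c) m" by (simp add: y_def)
          also have "\<dots> \<le> (1 - \<delta>) * 2" using x2 d0 by (intro mult_left_mono) auto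
          also have "\<dots> < 2" using d0 by simp
          finally show "inner (y - c) m < 2" .
        qed
        have "dist y w = \<delta> * norm (w - c)"
        proof -
          have "w - y = \<delta> *\<^sub>R (w - c)" by (simp add: y_def algebra_simps)
          then show ?thesis using d0 by (simp add: dist_norm norm_minus_commute)
        qed
        also have "\<dots> \<le> e / (norm (w - c) + 1) * norm (w - c)"
          by (intro mult_right_mono) (auto simp: \<delta>_def)
        also have "\<dots> < e"
        proof -
          have "norm (w - c) < norm (w - c) + 1" by simp
          then have lt: "e * norm (w - c) < e * (norm (w - c) + 1)" using e by simp
          have "e / (norm (w - c) + 1) * norm (w - c) = (e * norm (w - c)) / (norm (w - c) + 1)" by simp
          moreover have "(e * norm (w - c)) / (norm (w - c) + 1) < e" using lt np by (simp add: pos_divide_less_eq)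
          ultimately show ?thesis by linarith
        qed
        finally show "\<exists>y\<in>UU q c. dist y w < e" using yU by blast
      qed
      then show "w \<in> frontier (UU q c)" using fr nU by simp
    qed
  qed
qed


lemma seg_shift: "z \<in> closed_segment x (y + v) \<longleftrightarrow> z - v \<in> closed_segment y (x - v)"
proof -
  have "z \<in> closed_segment x (y + v) \<longleftrightarrow> (\<exists>t. 0 \<le> t \<and> t \<le> 1 \<and> z = (1 - t) *\<^sub>R x + t *\<^sub>R (y + v))"
    by (auto simp: closed_segment_def)
  also have "\<dots> \<longleftrightarrow> (\<exists>t. 0 \<le> t \<and> t \<le> 1 \<and> z - v = (1 - t) *\<^sub>R (x - v) + t *\<^sub>R y)"
    by (intro ex_cong1) (auto simp: vec2_eq algebra_simps)
  also have "\<dots> \<longleftrightarrow> z - v \<in> closed_segment (x - v) y"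
    by (auto simp: closed_segment_def)
  finally show ?thesis by (simp add: closed_segment_commute)
qed

lemma vipp1_UU:
  fixes a a' b b' :: "real^2"
  assumes "norm (b - a) \<ge> 2"
  shows "vipp1 (a, a') (b, b') = UU (b - a) (a - b')"
proof -
  have "vipp1 (a, a') (b, b') = {v. \<exists>z\<in>closed_segment b (b' + v). dist a z < 2}"
    by (simp add: vipp1_def hull_pair_def disc_def hull_balls_iff)
  also have "\<dots> = {v. b' + v \<in> {w. \<exists>z\<in>closed_segment b w. dist a z < 2}}" by simp
  also have "\<dots> = {v. b' + v \<in> UU (b - a) a}" using Sh_eq[of b a] assms by simp
  also have "\<dots> = UU (b - a) (a - b')"
    by (auto simp: UU_def algebra_simps)
  finally show ?thesis .
qed

lemma NN_neg: "m \<in> NN (- q) \<longleftrightarrow> - m \<in> NN q"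
  by (simp add: NN_def)

lemma vipp2_UU:
  fixes a a' b b' :: "real^2"
  assumes "norm (b' - a') \<ge> 2"
  shows "vipp2 (a, a') (b, b') = UU (b' - a') (a - b')"
proof -
  have "vipp2 (a, a') (b, b') = {v. \<exists>z\<in>closed_segment a (a' + v). dist (b' + v) z < 2}"
    by (simp add: vipp2_def hull_pair_def disc_def hull_balls_iff)
  also have "\<dots> = {v. \<exists>z\<in>closed_segment a' (a - v). dist b' z < 2}"
  proof (intro Collect_cong iffI)
    fix v assume "\<exists>z\<in>closed_segment a (a' + v). dist (b' + v) z < 2"
    then obtain z where "z \<in> closed_segment a (a' + v)" "dist (b' + v) z < 2" by blast
    then have "z - v \<in> closed_segment a' (a - v)" "dist b' (z - v) < 2"
      using seg_shift by (auto simp: dist_norm algebra_simps)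
    then show "\<exists>z\<in>closed_segment a' (a - v). dist b' z < 2" by blast
  next
    fix v assume "\<exists>z\<in>closed_segment a' (a - v). dist b' z < 2"
    then obtain z where z: "z \<in> closed_segment a' (a - v)" "dist b' z < 2" by blast
    have "(z + v) - v \<in> closed_segment a' (a - v)" using z by simp
    then have "z + v \<in> closed_segment a (a' + v)" using seg_shift[of "z + v" a a' v] by simp
    moreover have "dist (b' + v) (z + v) < 2" using z(2) by (simp add: dist_norm algebra_simps)
    ultimately show "\<exists>z\<in>closed_segment a (a' + v). dist (b' + v) z < 2" by blast
  qed
  also have "\<dots> = {v. a - v \<in> UU (a' - b') b'}"
  proof -
    have eq: "{w. \<exists>z\<in>closed_segment a' w. dist b' z < 2} = UU (a' - b') b'"
      using Sh_eq[of a' b'] assms by (simp add: norm_minus_commute)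
    show ?thesis by (subst eq[symmetric]) simp
  qed
  also have "\<dots> = UU (b' - a') (a - b')"
  proof (intro set_eqI iffI)
    fix v assume v: "v \<in> {v. a - v \<in> UU (a' - b') b'}"
    show "v \<in> UU (b' - a') (a - b')" unfolding UU_def
    proof (intro CollectI ballI)
      fix m assume "m \<in> NN (b' - a')"
      then have "- m \<in> NN (a' - b')" by (auto simp: NN_def inner_diff_left)
      then have "inner (a - v - b') (- m) < 2" using v by (auto simp: UU_def)
      then show "inner (v - (a - b')) m < 2" by (simp add: inner_diff_left)
    qed
  next
    fix v assume v: "v \<in> UU (b' - a') (a - b')"
    show "v \<in> {v. a - v \<in> UU (a' - b') b'}" unfolding UU_def
    proof (intro CollectI ballI)
      fix m assume "m \<in> NN (a' - b')"
      then have "- m \<in> NN (b' - a')" by (auto simp: NN_def inner_diff_left)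
      then have "inner (v - (a - b')) (- m) < 2" using v by (auto simp: UU_def)
      then show "inner (a - v - b') m < 2" by (simp add: inner_diff_left)
    qed
  qed
  finally show ?thesis .
qed

lemma vipp_form:
  assumes S: "valid_config S" and T: "valid_config T" and M: "bij_betw M S T"
    and i: "i \<in> {1, 2}" and A: "A \<in> pairs_of M S" and B: "B \<in> pairs_of M S" and AB: "A \<noteq> B"
  shows "\<exists>q c. norm q \<ge> 2 \<and> vippodrome i A B = UU q c"
proof -
  obtain s where s: "s \<in> S" "A = (s, M s)" using A by (auto simp: pairs_of_def)
  obtain t where t: "t \<in> S" "B = (t, M t)" using B by (auto simp: pairs_of_def)
  have st: "s \<noteq> t" using AB s t by auto
  have d1: "norm (t - s) \<ge> 2" using S s t st by (auto simp: valid_config_def dist_norm norm_minus_commute)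
  have Mst: "M s \<noteq> M t" using M st s t by (auto simp: bij_betw_def inj_on_def)
  have MT: "M s \<in> T" "M t \<in> T" using M s t by (auto simp: bij_betw_def)
  have d2: "norm (M t - M s) \<ge> 2" using T MT Mst by (auto simp: valid_config_def dist_norm norm_minus_commute)
  show ?thesis
  proof (cases "i = 1")
    case True
    then show ?thesis using vipp1_UU[OF d1, of "M s" "M t"] d1 s t by (auto simp: vippodrome_def)
  next
    case False
    then show ?thesis using vipp2_UU[OF d2, of s t] d2 s t by (auto simp: vippodrome_def)
  qed
qed

theorem mainTheorem2:
  fixes S T :: "pt set" and M :: "pt \<Rightarrow> pt" and i j :: nat
    and A B C D :: "pt \<times> pt"
  assumes "valid_config S" and "valid_config T" and "bij_betw M S T"
    and "i \<in> {1, 2}" and "j \<in> {1, 2}"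
    and "A \<in> pairs_of M S" and "B \<in> pairs_of M S" and "A \<noteq> B"
    and "C \<in> pairs_of M S" and "D \<in> pairs_of M S" and "C \<noteq> D"
    and "(i, A, B) \<noteq> (j, C, D)"
    and "finite (frontier (vippodrome i A B) \<inter> frontier (vippodrome j C D))"
  shows "card (frontier (vippodrome i A B) \<inter> frontier (vippodrome j C D)) \<le> 4"
proof -
  obtain q1 c1 where 1: "norm q1 \<ge> 2" "vippodrome i A B = UU q1 c1"
    using vipp_form[OF assms(1,2,3,4,6,7,8)] by blast
  obtain q2 c2 where 2: "norm q2 \<ge> 2" "vippodrome j C D = UU q2 c2"
    using vipp_form[OF assms(1,2,3,5,9,10,11)] by blast
  have "frontier (vippodrome i A B) = GG q1 c1" using 1 frontier_UU by simp
  moreover have "frontier (vippodrome j C D) = GG q2 c2" using 2 frontier_UU by simp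
  ultimately show ?thesis using core_count[OF 1(1) 2(1)] assms(13) by simp
qed


end
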